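(* For every integer $n\ge 1$, \[ \sum_{\sigma \in \mathrm{And}^{I}_n} s^{\mathrm{ides}(\sigma)}t^{\mathrm{des}(\sigma)} q^{\mathrm{maj}(\sigma)} =\sum_{\sigma \in \mathrm{And}^{II}_n} s^{\mathrm{ides}(\sigma)}t^{\mathrm{des}(\sigma)} q^{\mathrm{maj}(\sigma)} =\sum_{\sigma \in \mathrm{RS}_{n}} s^{\mathrm{ides}(\sigma)}t^{\mathrm{des}(\sigma)} q^{\mathrm{maj}(\sigma)} \] as polynomials in $s,t,q$.
   Context: A "permutation" of length $n$ here may be any word of $n$ distinct integers. The empty word and every one-letter word are both Andr\'e I and Andr\'e II permutations. A word $\sigma$ of $n\ge 2$ distinct integers is written uniquely as $\sigma=\tau\,\min(\sigma)\,\tau'$. Then $\sigma$ is an Andr\'e I permutation if $\tau$ and $\tau'$ are Andr\'e I permutations and the largest letter of the word $\tau\tau'$ lies in $\tau'$; $\sigma$ is an Andr\'e II permutation if $\tau$ and $\tau'$ are Andr\'e II permutations and the smallest letter of $\tau\tau'$ lies in $\tau'$. $\mathrm{And}^{I}_n$ (resp. $\mathrm{And}^{II}_n$) is the set of Andr\'e I (resp. Andr\'e II) permutations of $[n]=\{1,\dots,n\}$. A permutation $\sigma=\sigma_1\cdots\sigma_n$ of $[n]$ is a simsun permutation if $\sigma_n=n$ and, for every $k\in\{1,\dots,n\}$, the subword of $\sigma$ formed by the letters $1,\dots,k$ has no double descent (a double descent of a word $w_1\cdots w_m$ is an index $i$ with $w_i>w_{i+1}>w_{i+2}$). $\mathrm{RS}_n$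 is the set of simsun permutations of $[n]$. For $\sigma=\sigma_1\cdots\sigma_n$: $\mathrm{Des}(\sigma)=\{i\in[n-1]:\sigma_i>\sigma_{i+1}\}$, $\mathrm{des}(\sigma)=|\mathrm{Des}(\sigma)|$, $\mathrm{maj}(\sigma)=\sum_{i\in\mathrm{Des}(\sigma)} i$, and $\mathrm{ides}(\sigma)=\mathrm{des}(\sigma^{-1})$, the number of descents of the inverse permutation. *)

theory Defs
  imports Main
begin

definition left_part :: "int list \<Rightarrow> int list" where
  "left_part w = takeWhile (\<lambda>x. x \<noteq> Min (set w)) w"

definition right_part :: "int list \<Rightarrow> int list" where
  "right_part w = tl (dropWhile (\<lambda>x. x \<noteq> Min (set w)) w)"

lemma takeWhile_shorter: "x \<in> set w \<Longrightarrow> length (takeWhile (\<lambda>y. y \<noteq> x) w) < length w"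
  by (induction w) auto

lemma left_part_shorter: "w \<noteq> [] \<Longrightarrow> length (left_part w) < length w"
  unfolding left_part_def by (rule takeWhile_shorter) simp

lemma right_part_shorter: "w \<noteq> [] \<Longrightarrow> length (right_part w) < length w"
proof -
  assume "w \<noteq> []"
  then have "Min (set w) \<in> set w" by simp
  then have "dropWhile (\<lambda>x. x \<noteq> Min (set w)) w \<noteq> []"
    by (simp add: dropWhile_eq_Nil_conv)
  moreover have "length (dropWhile (\<lambda>x. x \<noteq> Min (set w)) w) \<le> length w"
    by (simp add: length_dropWhile_le)
  ultimately show ?thesis unfolding right_part_def
    by (cases "dropWhile (\<lambda>x. x \<noteq> Min (set w)) w") auto
qed

function andreI :: "int list \<Rightarrow> bool" where
  "andreI w = (if length w \<le> 1 then True else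
     (andreI (left_part w) \<and> andreI (right_part w) \<and>
      Max (set (left_part w @ right_part w)) \<in> set (right_part w)))"
  by pat_completeness auto
termination
  by (relation "measure length") (auto intro!: left_part_shorter right_part_shorter)

function andreII :: "int list \<Rightarrow> bool" where
  "andreII w = (if length w \<le> 1 then True else
     (andreII (left_part w) \<and> andreII (right_part w) \<and>
      Min (set (left_part w @ right_part w)) \<in> set (right_part w)))"
  by pat_completeness auto
termination
  by (relation "measure length") (auto intro!: left_part_shorter right_part_shorter)

definition perms :: "nat \<Rightarrow> int list set" where
  "perms n = {w. distinct w \<and> set w = {1..int n}}"

definition AndI :: "nat \<Rightarrow> int list set" where
  "AndI n = {w \<in> perms n. andreI w}"

definition AndII :: "nat \<Rightarrow> int list set" where
  "AndII n = {w \<in> perms n. andreII w}"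

definition has_double_descent :: "int list \<Rightarrow> bool" where
  "has_double_descent u = (\<exists>i. i + 2 < length u \<and> u ! i > u ! (i+1) \<and> u ! (i+1) > u ! (i+2))"

definition RS :: "nat \<Rightarrow> int list set" where
  "RS n = {w \<in> perms n. w \<noteq> [] \<and> last w = int n \<and>
     (\<forall>k\<in>{1..int n}. \<not> has_double_descent (filter (\<lambda>x. x \<le> k) w))}"

text \<open>Descent set with 1-based positions: i \<in> Des w iff w_i > w_(i+1).\<close>
definition Des :: "int list \<Rightarrow> nat set" where
  "Des w = {i. 1 \<le> i \<and> i < length w \<and> w ! (i - 1) > w ! i}"

definition des :: "int list \<Rightarrow> nat" where
  "des w = card (Des w)"

definition maj :: "int list \<Rightarrow> nat" where
  "maj w = (\<Sum>i\<in>Des w. i)"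

text \<open>Inverse of a permutation w of [n], as a word: its j-th letter is the
  (1-based) position of letter j in w.\<close>
definition inv_word :: "int list \<Rightarrow> int list" where
  "inv_word w = map (\<lambda>j. int (Suc (THE i. i < length w \<and> w ! i = int j))) [1..<Suc (length w)]"

definition ides :: "int list \<Rightarrow> nat" where
  "ides w = des (inv_word w)"

end

theory Submission
  imports Defs
begin

declare andreI.simps[simp del] andreII.simps[simp del]

lemma Min_in_w: "w \<noteq> [] \<Longrightarrow> Min (set w) \<in> set w" by simp

lemma lr_decomp: "w \<noteq> [] \<Longrightarrow> w = left_part w @ [Min (set w)] @ right_part w"
proof -
  assume w: "w \<noteq> []"
  let ?P = "\<lambda>x. x \<noteq> Min (set w)"
  have "dropWhile ?P w \<noteq> []" using w by (simp add: dropWhile_eq_Nil_conv)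
  moreover have "hd (dropWhile ?P w) = Min (set w)"
    using w hd_dropWhile[of ?P w] \<open>dropWhile ?P w \<noteq> []\<close> by simp
  ultimately have "dropWhile ?P w = Min (set w) # tl (dropWhile ?P w)"
    by (metis list.collapse)
  then show ?thesis unfolding left_part_def right_part_def
    by (metis append_Cons append_Nil takeWhile_dropWhile_id)
qed

lemma left_gt: "x \<in> set (left_part w) \<Longrightarrow> Min (set w) < x"
proof -
  assume x: "x \<in> set (left_part w)"
  then have "x \<in> set w" "x \<noteq> Min (set w)" unfolding left_part_def
    by (auto dest: set_takeWhileD)
  then show ?thesis by (simp add: order_neq_le_trans)
qed

lemma right_ge: "x \<in> set (right_part w) \<Longrightarrow> Min (set w) \<le> x"
proof -
  assume x: "x \<in> set (right_part w)"
  then have "x \<in> set w" unfolding right_part_def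
    by (metis list.sel(2) list.set_sel(2) set_dropWhileD)
  then show ?thesis by simp
qed

lemma split_parts:
  assumes "\<forall>x\<in>set l. a < x" "\<forall>x\<in>set r. a \<le> x"
  shows "Min (set (l @ a # r)) = a" "left_part (l @ a # r) = l" "right_part (l @ a # r) = r"
proof -
  show m: "Min (set (l @ a # r)) = a"
    using assms by (intro Min_eqI) (auto intro: less_imp_le)
  have "a \<notin> set l" using assms by auto
  then have tw: "takeWhile (\<lambda>x. x \<noteq> a) (l @ a # r) = l"
    by (subst takeWhile_append2) auto
  have dw: "dropWhile (\<lambda>x. x \<noteq> a) (l @ a # r) = a # r"
    using \<open>a \<notin> set l\<close> by (subst dropWhile_append2) auto
  show "left_part (l @ a # r) = l" unfolding left_part_def m using tw .
  show "right_part (l @ a # r) = r" unfolding right_part_def m using dw by simp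
qed

lemma andreI_split:
  assumes "\<forall>x\<in>set l. a < x" "\<forall>x\<in>set r. a \<le> x"
  shows "andreI (l @ a # r) = (if l = [] \<and> r = [] then True else
            andreI l \<and> andreI r \<and> Max (set (l @ r)) \<in> set r)"
  using split_parts[OF assms] by (subst andreI.simps) auto

lemma andreII_split:
  assumes "\<forall>x\<in>set l. a < x" "\<forall>x\<in>set r. a \<le> x"
  shows "andreII (l @ a # r) = (if l = [] \<and> r = [] then True else
            andreII l \<and> andreII r \<and> Min (set (l @ r)) \<in> set r)"
  using split_parts[OF assms] by (subst andreII.simps) auto

lemma smono_Min: "strict_mono (f::int\<Rightarrow>int) \<Longrightarrow> xs \<noteq> [] \<Longrightarrow> Min (set (map f xs)) = f (Min (set xs))"
  by (simp add: mono_Min_commute strict_mono_mono)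

lemma smono_Max: "strict_mono (f::int\<Rightarrow>int) \<Longrightarrow> xs \<noteq> [] \<Longrightarrow> Max (set (map f xs)) = f (Max (set xs))"
  by (simp add: mono_Max_commute strict_mono_mono)

lemma smono_parts:
  assumes f: "strict_mono (f::int\<Rightarrow>int)" and w: "w \<noteq> []"
  shows "left_part (map f w) = map f (left_part w)" "right_part (map f w) = map f (right_part w)"
proof -
  have d: "map f w = map f (left_part w) @ f (Min (set w)) # map f (right_part w)"
    using lr_decomp[OF w] by (metis append.simps(1,2) map_append list.simps(9))
  have "\<forall>x\<in>set (map f (left_part w)). f (Min (set w)) < x"
    using left_gt f by (auto simp: strict_mono_less)
  moreover have "\<forall>x\<in>set (map f (right_part w)). f (Min (set w)) \<le> x"
    using right_ge f by (auto simp: strict_mono_less_eq)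
  ultimately show "left_part (map f w) = map f (left_part w)" "right_part (map f w) = map f (right_part w)"
    using split_parts d by metis+
qed

lemma andreI_smono: "strict_mono (f::int\<Rightarrow>int) \<Longrightarrow> andreI (map f w) = andreI w"
proof (induction w rule: andreI.induct)
  case (1 w)
  show ?case
  proof (cases "length w \<le> 1")
    case True then show ?thesis by (subst (1 2) andreI.simps) simp
  next
    case False
    then have w: "w \<noteq> []" by auto
    have inj: "inj f" using "1.prems" strict_mono_imp_inj_on by blast
    have "(Max (set (map f (left_part w) @ map f (right_part w))) \<in> set (map f (right_part w)))
        = (Max (set (left_part w @ right_part w)) \<in> set (right_part w))"
    proof (cases "left_part w @ right_part w = []")
      case True then show ?thesis by simp
    next
      case False
      have "Max (set (map f (left_part w) @ map f (right_part w))) = f (Max (set (left_part w @ right_part w)))"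
        using smono_Max[OF "1.prems" False] by simp
      then show ?thesis using inj by (simp add: inj_image_mem_iff)
    qed
    then show ?thesis using False "1.IH"[OF False] "1.prems" smono_parts[OF "1.prems" w]
      by (subst (1 2) andreI.simps) simp
  qed
qed

lemma andreII_smono: "strict_mono (f::int\<Rightarrow>int) \<Longrightarrow> andreII (map f w) = andreII w"
proof (induction w rule: andreII.induct)
  case (1 w)
  show ?case
  proof (cases "length w \<le> 1")
    case True then show ?thesis by (subst (1 2) andreII.simps) simp
  next
    case False
    then have w: "w \<noteq> []" by auto
    have inj: "inj f" using "1.prems" strict_mono_imp_inj_on by blast
    have "(Min (set (map f (left_part w) @ map f (right_part w))) \<in> set (map f (right_part w)))
        = (Min (set (left_part w @ right_part w)) \<in> set (right_part w))"
    proof (cases "left_part w @ right_part w = []")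
      case True then show ?thesis by simp
    next
      case False
      have "Min (set (map f (left_part w) @ map f (right_part w))) = f (Min (set (left_part w @ right_part w)))"
        using smono_Min[OF "1.prems" False] by simp
      then show ?thesis using inj by (simp add: inj_image_mem_iff)
    qed
    then show ?thesis using False "1.IH"[OF False] "1.prems" smono_parts[OF "1.prems" w]
      by (subst (1 2) andreII.simps) simp
  qed
qed

lemma Des_cong:
  assumes "length u = length w" "\<And>i. Suc i < length w \<Longrightarrow> (u ! i > u ! Suc i) = (w ! i > w ! Suc i)"
  shows "Des u = Des w"
  unfolding Des_def using assms
  by (auto; metis Suc_pred' less_imp_Suc_add not_less0 add_gr_0 less_numeral_extra(1) Suc_le_eq One_nat_def)

lemma Des_smono: "strict_mono (f::int\<Rightarrow>int) \<Longrightarrow> Des (map f w) = Des w"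
  by (rule Des_cong) (auto simp: strict_mono_less)

lemma Des_mem: "Suc i < length w \<Longrightarrow> (Suc i \<in> Des w) = (w ! i > w ! Suc i)"
  unfolding Des_def by auto

lemma Des_split_cong:
  assumes "\<forall>x\<in>set l. a < x" "\<forall>x\<in>set r. a \<le> x"
    "\<forall>x\<in>set l'. a' < x" "\<forall>x\<in>set r'. a' \<le> x"
    "length l = length l'" "length r = length r'" "Des l = Des l'" "Des r = Des r'"
  shows "Des (l @ a # r) = Des (l' @ a' # r')"
proof (rule Des_cong)
  show "length (l @ a # r) = length (l' @ a' # r')" using assms by simp
  fix i assume i: "Suc i < length (l' @ a' # r')"
  consider "Suc i < length l" | "Suc i = length l" | "i = length l" | "i > length l" by linarith
  then show "((l @ a # r) ! i > (l @ a # r) ! Suc i) = ((l' @ a' # r') ! i > (l' @ a' # r') ! Suc i)"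
  proof cases
    case 1
    then have "(l ! i > l ! Suc i) = (l' ! i > l' ! Suc i)"
      using assms(5,7) by (metis Des_mem)
    moreover have "(l @ a # r) ! i = l ! i" "(l @ a # r) ! Suc i = l ! Suc i" using 1 by (auto simp: nth_append)
    moreover have "(l' @ a' # r') ! i = l' ! i" "(l' @ a' # r') ! Suc i = l' ! Suc i" using 1 assms(5) by (auto simp: nth_append)
    ultimately show ?thesis by simp
  next
    case 2
    then have "l ! i \<in> set l" "l' ! i \<in> set l'" using assms(5) by auto
    then have "l ! i > a" "l' ! i > a'" using assms(1,3) by auto
    moreover have "(l @ a # r) ! i = l ! i" "(l @ a # r) ! Suc i = a" using 2 by (auto simp: nth_append)
    moreover have "(l' @ a' # r') ! i = l' ! i" "(l' @ a' # r') ! Suc i = a'" using 2 assms(5) by (auto simp: nth_append)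
    ultimately show ?thesis by simp
  next
    case 3
    then have "r \<noteq> []" "r' \<noteq> []" using i assms(5,6) by auto
    then have "r ! 0 \<in> set r" "r' ! 0 \<in> set r'" by auto
    then have "a \<le> r ! 0" "a' \<le> r' ! 0" using assms(2,4) by auto
    moreover have "(l @ a # r) ! i = a" "(l @ a # r) ! Suc i = r ! 0" using 3 by (auto simp: nth_append)
    moreover have "(l' @ a' # r') ! i = a'" "(l' @ a' # r') ! Suc i = r' ! 0" using 3 assms(5) by (auto simp: nth_append)
    ultimately show ?thesis by simp
  next
    case 4
    define j where "j = i - length l - 1"
    have j: "i = length l + Suc j" using 4 unfolding j_def by simp
    then have sj: "Suc j < length r" using i assms(5,6) by simp
    then have "(r ! j > r ! Suc j) = (r' ! j > r' ! Suc j)"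
      using assms(6,8) by (metis Des_mem)
    moreover have "(l @ a # r) ! i = r ! j" "(l @ a # r) ! Suc i = r ! Suc j" using j by (auto simp: nth_append)
    moreover have "(l' @ a' # r') ! i = r' ! j" "(l' @ a' # r') ! Suc i = r' ! Suc j" using j assms(5) by (auto simp: nth_append)
    ultimately show ?thesis by simp
  qed
qed

function andreIIw :: "int list \<Rightarrow> bool" where
  "andreIIw w = (if length w \<le> 1 then True else
     (andreIIw (left_part w) \<and> andreIIw (right_part w) \<and> right_part w \<noteq> [] \<and>
      (left_part w = [] \<or> Min (set (right_part w)) < Min (set (left_part w)))))"
  by pat_completeness auto
termination
  by (relation "measure length") (auto intro!: left_part_shorter right_part_shorter)

declare andreIIw.simps[simp del]

lemma andreIIw_split:
  assumes "\<forall>x\<in>set l. a < x" "\<forall>x\<in>set r. a \<le> x"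
  shows "andreIIw (l @ a # r) = (if l = [] \<and> r = [] then True else
            andreIIw l \<and> andreIIw r \<and> r \<noteq> [] \<and> (l = [] \<or> Min (set r) < Min (set l)))"
  using split_parts[OF assms] by (subst andreIIw.simps) auto

lemma andreIIw_smono: "strict_mono (f::int\<Rightarrow>int) \<Longrightarrow> andreIIw (map f w) = andreIIw w"
proof (induction w rule: andreIIw.induct)
  case (1 w)
  show ?case
  proof (cases "length w \<le> 1")
    case True then show ?thesis by (subst (1 2) andreIIw.simps) simp
  next
    case False
    then have w: "w \<noteq> []" by auto
    have "right_part w \<noteq> [] \<longrightarrow> (left_part w = [] \<or> Min (set (map f (right_part w))) < Min (set (map f (left_part w))))
      = (left_part w = [] \<or> Min (set (right_part w)) < Min (set (left_part w)))"
    proof (cases "left_part w = []")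
      case False
      then show ?thesis
        using smono_Min[OF "1.prems", of "right_part w"] smono_Min[OF "1.prems" False] strict_mono_less[OF "1.prems"]
        by auto
    qed simp
    then show ?thesis using False "1.IH"[OF False] "1.prems" smono_parts[OF "1.prems" w]
      by (subst (1 2) andreIIw.simps) (simp del: set_map, blast)
  qed
qed

definition shift :: "int \<Rightarrow> int list \<Rightarrow> int list" where
  "shift c w = map (\<lambda>v. v + c) w"

lemma shift_smono: "strict_mono (\<lambda>v::int. v + c)"
  by (simp add: strict_mono_def)

lemma shift_simps[simp]: "length (shift c w) = length w" "shift c [] = []"
  "set (shift c w) = (\<lambda>v. v + c) ` set w" "shift c w = [] \<longleftrightarrow> w = []"
  "shift d (shift c w) = shift (c + d) w" "shift 0 w = w"
  by (auto simp: shift_def add.assoc)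

lemma shift_Min: "w \<noteq> [] \<Longrightarrow> Min (set (shift c w)) = Min (set w) + c"
  unfolding shift_def using smono_Min[OF shift_smono] by simp

lemma shift_Max: "w \<noteq> [] \<Longrightarrow> Max (set (shift c w)) = Max (set w) + c"
  unfolding shift_def using smono_Max[OF shift_smono] by simp

lemma shift_andreI[simp]: "andreI (shift c w) = andreI w"
  unfolding shift_def by (rule andreI_smono[OF shift_smono])

lemma shift_andreIIw[simp]: "andreIIw (shift c w) = andreIIw w"
  unfolding shift_def by (rule andreIIw_smono[OF shift_smono])

lemma shift_Des[simp]: "Des (shift c w) = Des w"
  unfolding shift_def by (rule Des_smono[OF shift_smono])

function Phi :: "int \<Rightarrow> int list \<Rightarrow> int list" where
  "Phi m w = (if length w \<le> 1 then w else
    (let a = Min (set w); t = Phi m (left_part w); u = Phi m (right_part w);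
         b = Min (set u) - a; c = m - b - Max (set u)
     in shift (-b) t @ a # shift c u))"
  by pat_completeness auto
termination
  by (relation "measure (\<lambda>(m,w). length w)") (auto intro!: left_part_shorter right_part_shorter)

function Psi :: "int \<Rightarrow> int list \<Rightarrow> int list" where
  "Psi m w = (if length w \<le> 1 then w else
    (let a = Min (set w); l = left_part w; r = right_part w; b = m - Max (set r)
     in Psi m (shift b l) @ a # Psi m (shift (a + b - Min (set r)) r)))"
  by pat_completeness auto
termination
  by (relation "measure (\<lambda>(m,w). length w)") (auto intro!: left_part_shorter right_part_shorter)

declare Phi.simps[simp del] Psi.simps[simp del]

lemma andreI_short: "length w \<le> 1 \<Longrightarrow> andreI w" by (subst andreI.simps) simp
lemma andreII_short: "length w \<le> 1 \<Longrightarrow> andreII w" by (subst andreII.simps) simp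
lemma andreIIw_short: "length w \<le> 1 \<Longrightarrow> andreIIw w" by (subst andreIIw.simps) simp

lemma Phi_short: "length w \<le> 1 \<Longrightarrow> Phi m w = w" by (subst Phi.simps) simp
lemma Psi_short: "length w \<le> 1 \<Longrightarrow> Psi m w = w" by (subst Psi.simps) simp

definition good :: "int \<Rightarrow> int list \<Rightarrow> bool" where
  "good m w \<longleftrightarrow> (\<forall>v\<in>set w. v \<le> m)"

lemma good_Max: "w \<noteq> [] \<Longrightarrow> good m w \<longleftrightarrow> Max (set w) \<le> m"
  unfolding good_def by auto

lemma Phi_props:
  "andreIIw w \<Longrightarrow> w \<noteq> [] \<Longrightarrow> good m w \<Longrightarrow>
   length (Phi m w) = length w \<and> Min (set (Phi m w)) = Min (set w) \<and> good m (Phi m w)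
   \<and> andreI (Phi m w) \<and> Des (Phi m w) = Des w"
proof (induction m w rule: Phi.induct)
  case (1 m w)
  show ?case
  proof (cases "length w \<le> 1")
    case True
    then show ?thesis using "1.prems" by (simp add: Phi_short andreI_short)
  next
    case False
    define a where "a = Min (set w)"
    define l where "l = left_part w"
    define r where "r = right_part w"
    have w: "w \<noteq> []" using False by auto
    have wd: "w = l @ a # r" using lr_decomp[OF w] unfolding a_def l_def r_def by simp
    have lg: "\<forall>x\<in>set l. a < x" unfolding l_def a_def using left_gt by blast
    have rg: "\<forall>x\<in>set r. a \<le> x" unfolding r_def a_def using right_ge by blast
    have "andreIIw l \<and> andreIIw r \<and> r \<noteq> [] \<and> (l = [] \<or> Min (set r) < Min (set l))"
      using "1.prems"(1) False unfolding l_def r_def by (subst (asm) andreIIw.simps) simp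
    then have II: "andreIIw l" "andreIIw r" "r \<noteq> []" "l = [] \<or> Min (set r) < Min (set l)" by auto
    have gl: "good m l" "good m r" "a \<le> m" using "1.prems"(3) wd unfolding good_def by auto
    define t where "t = Phi m l"
    define u where "u = Phi m r"
    have IHr: "length u = length r \<and> Min (set u) = Min (set r) \<and> good m u \<and> andreI u \<and> Des u = Des r"
      using "1.IH"(2)[OF False] II gl unfolding u_def r_def by blast
    have IHl: "l \<noteq> [] \<Longrightarrow> length t = length l \<and> Min (set t) = Min (set l) \<and> good m t \<and> andreI t \<and> Des t = Des l"
      using "1.IH"(1)[OF False] II gl unfolding t_def l_def by blast
    have t0: "l = [] \<Longrightarrow> t = []" unfolding t_def by (simp add: Phi_short)
    define b where "b = Min (set u) - a"
    define c where "c = m - b - Max (set u)"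
    have ue: "u \<noteq> []" using IHr II by auto
    have Phiw: "Phi m w = shift (-b) t @ a # shift c u"
      using False unfolding b_def c_def t_def u_def a_def l_def r_def by (subst Phi.simps) (simp add: Let_def)
    have b0: "0 \<le> b" unfolding b_def using IHr rg II(3) by simp
    have Mu: "Max (set u) \<le> m" using IHr ue good_Max by blast
    have lg': "\<forall>x\<in>set (shift (-b) t). a < x"
    proof
      fix x assume "x \<in> set (shift (-b) t)"
      then obtain y where y: "y \<in> set t" "x = y - b" by auto
      then have "l \<noteq> []" using t0 by auto
      then have "Min (set t) = Min (set l)" "Min (set r) < Min (set l)" using IHl II by auto
      moreover have "Min (set t) \<le> y" using y by simp
      ultimately show "a < x" using y IHr unfolding b_def by simp
    qed
    have rg': "\<forall>x\<in>set (shift c u). a \<le> x"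
    proof
      fix x assume "x \<in> set (shift c u)"
      then obtain y where y: "y \<in> set u" "x = y + c" by auto
      have "Min (set u) \<le> y" using y by simp
      then show "a \<le> x" using y Mu unfolding c_def b_def by linarith
    qed
    have gt: "good m (shift (-b) t)"
    proof (cases "l = []")
      case True then show ?thesis using t0 by (simp add: good_def)
    next
      case False then show ?thesis using IHl b0 unfolding good_def by auto
    qed
    have Mr': "Max (set (shift c u)) = m - b" using shift_Max[OF ue] unfolding c_def by simp
    have gu: "good m (shift c u)" using Mr' b0 ue by (simp add: good_Max)
    have sp: "Min (set (shift (-b) t @ a # shift c u)) = a"
      using split_parts[OF lg' rg'] by simp
    have lenl: "length t = length l" using t0 IHl by (cases "l = []") auto
    have andl: "andreI t"
      using t0 IHl by (cases "l = []") (auto simp: andreI_short)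
    have desl: "Des t = Des l"
      using t0 IHl by (cases "l = []") auto
    have maxc: "Max (set (shift (-b) t @ shift c u)) \<in> set (shift c u)"
    proof -
      have A: "\<forall>x\<in>set (shift (-b) t). x \<le> m - b"
        using IHl t0 by (cases "l = []") (auto simp: good_def)
      have M: "Max (set (shift c u)) \<in> set (shift c u)"
        using ue by (intro Max_in) auto
      have "Max (set (shift (-b) t @ shift c u)) = Max (set (shift c u))"
      proof (rule Max_eqI)
        fix y assume "y \<in> set (shift (-b) t @ shift c u)"
        then have "y \<in> set (shift (-b) t) \<or> y \<in> set (shift c u)" by (simp only: set_append Un_iff)
        then show "y \<le> Max (set (shift c u))"
        proof
          assume "y \<in> set (shift (-b) t)"
          then have "y \<le> m - b" using A by blast
          then show ?thesis using Mr' by simp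
        next
          assume "y \<in> set (shift c u)"
          then show ?thesis by (rule Max_ge[OF finite_set])
        qed
      qed (use M in auto)
      then show ?thesis using M by simp
    qed
    have andw: "andreI (shift (-b) t @ a # shift c u)"
      using andreI_split[OF lg' rg'] ue andl IHr maxc by simp
    have desw: "Des (shift (-b) t @ a # shift c u) = Des w"
      unfolding wd by (rule Des_split_cong[OF lg' rg' lg rg]) (use lenl IHr desl in auto)
    have lw: "length w = Suc (length l + length r)" using arg_cong[OF wd, of length] by simp
    have m1: "Min (set (Phi m w)) = Min (set w)" using Phiw sp a_def by simp
    have m2: "length (Phi m w) = length w" using Phiw lenl IHr lw by simp
    have m3: "good m (Phi m w)" using Phiw gt gu gl(3) unfolding good_def by auto
    show ?thesis using m1 m2 m3 Phiw andw desw by simp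
  qed
qed


lemma andreI_parts:
  assumes "andreI w" "\<not> length w \<le> 1"
  shows "andreI (left_part w)" "andreI (right_part w)" "right_part w \<noteq> []"
    "left_part w \<noteq> [] \<Longrightarrow> Max (set (left_part w)) \<le> Max (set (right_part w))"
proof -
  have A: "andreI (left_part w) \<and> andreI (right_part w) \<and> Max (set (left_part w @ right_part w)) \<in> set (right_part w)"
    using assms by (subst (asm) andreI.simps) simp
  then show "andreI (left_part w)" "andreI (right_part w)" by auto
  show r: "right_part w \<noteq> []" using A by auto
  assume "left_part w \<noteq> []"
  have "Max (set (left_part w)) \<le> Max (set (left_part w @ right_part w))"
    using \<open>left_part w \<noteq> []\<close> by (intro Max_mono) auto
  also have "\<dots> \<le> Max (set (right_part w))"
    using A by (intro Max_ge) auto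
  finally show "Max (set (left_part w)) \<le> Max (set (right_part w))" .
qed

lemma andreIIw_parts:
  assumes "andreIIw w" "\<not> length w \<le> 1"
  shows "andreIIw (left_part w)" "andreIIw (right_part w)" "right_part w \<noteq> []"
    "left_part w \<noteq> [] \<Longrightarrow> Min (set (right_part w)) < Min (set (left_part w))"
proof -
  have "andreIIw (left_part w) \<and> andreIIw (right_part w) \<and> right_part w \<noteq> [] \<and>
      (left_part w = [] \<or> Min (set (right_part w)) < Min (set (left_part w)))"
    using assms by (subst (asm) andreIIw.simps) simp
  then show "andreIIw (left_part w)" "andreIIw (right_part w)" "right_part w \<noteq> []"
    "left_part w \<noteq> [] \<Longrightarrow> Min (set (right_part w)) < Min (set (left_part w))" by auto
qed

lemma Psi_props:
  "andreI w \<Longrightarrow> w \<noteq> [] \<Longrightarrow> good m w \<Longrightarrow>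
   length (Psi m w) = length w \<and> Min (set (Psi m w)) = Min (set w) \<and> good m (Psi m w)
   \<and> andreIIw (Psi m w)"
proof (induction m w rule: Psi.induct)
  case (1 m w)
  show ?case
  proof (cases "length w \<le> 1")
    case True
    then show ?thesis using "1.prems" by (simp add: Psi_short andreIIw_short)
  next
    case False
    define a where "a = Min (set w)"
    define l where "l = left_part w"
    define r where "r = right_part w"
    have w: "w \<noteq> []" using False by auto
    have wd: "w = l @ a # r" using lr_decomp[OF w] unfolding a_def l_def r_def by simp
    have lg: "\<forall>x\<in>set l. a < x" unfolding l_def a_def using left_gt by blast
    have rg: "\<forall>x\<in>set r. a \<le> x" unfolding r_def a_def using right_ge by blast
    note I = andreI_parts[OF "1.prems"(1) False, folded l_def r_def]
    have gl: "good m l" "good m r" "a \<le> m" using "1.prems"(3) wd unfolding good_def by auto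
    define b where "b = m - Max (set r)"
    define t where "t = shift b l"
    define u where "u = shift (a + b - Min (set r)) r"
    have Psiw: "Psi m w = Psi m t @ a # Psi m u"
      using False unfolding b_def t_def u_def a_def l_def r_def by (subst Psi.simps) (simp add: Let_def)
    have b0: "0 \<le> b" unfolding b_def using gl(2) I(3) good_Max by simp
    have Mr: "Max (set r) \<le> m" using gl(2) I(3) good_Max by simp
    have ue: "u \<noteq> []" unfolding u_def using I by simp
    have Minu: "Min (set u) = a + b" unfolding u_def using shift_Min[OF I(3)] by simp
    have Maxu: "Max (set u) = m + a - Min (set r)" unfolding u_def b_def using shift_Max[OF I(3)] by simp
    have Minr: "a \<le> Min (set r)" using rg I(3) by simp
    have gu: "good m u" using Maxu Minr ue by (simp add: good_Max)
    have IHu: "length (Psi m u) = length u \<and> Min (set (Psi m u)) = Min (set u) \<and> good m (Psi m u) \<and> andreIIw (Psi m u)"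
      using "1.IH"(2)[OF False, of a l r b] I gu ue unfolding u_def a_def l_def r_def b_def by simp
    have IHt: "l \<noteq> [] \<Longrightarrow> length (Psi m t) = length t \<and> Min (set (Psi m t)) = Min (set t) \<and> good m (Psi m t) \<and> andreIIw (Psi m t)"
    proof -
      assume le: "l \<noteq> []"
      have "good m t" using I(4)[OF le] Mr le unfolding t_def b_def by (simp add: good_Max shift_Max)
      then show ?thesis
        using "1.IH"(1)[OF False, of a l r b] I le unfolding t_def a_def l_def r_def b_def by simp
    qed
    have t0: "l = [] \<Longrightarrow> Psi m t = []" unfolding t_def by (simp add: Psi_short)
    have lg': "\<forall>x\<in>set (Psi m t). a < x"
    proof
      fix x assume x: "x \<in> set (Psi m t)"
      then have le: "l \<noteq> []" using t0 by auto
      have "Min (set (Psi m t)) \<le> x" using x by simp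
      moreover have "Min (set t) = Min (set l) + b" unfolding t_def using shift_Min[OF le] .
      moreover have "a < Min (set l)" using lg le by simp
      ultimately show "a < x" using IHt[OF le] b0 by simp
    qed
    have rg': "\<forall>x\<in>set (Psi m u). a \<le> x"
    proof
      fix x assume x: "x \<in> set (Psi m u)"
      have "Min (set (Psi m u)) \<le> x" using x by simp
      then show "a \<le> x" using IHu Minu b0 by simp
    qed
    have sp: "Min (set (Psi m t @ a # Psi m u)) = a"
      using split_parts[OF lg' rg'] by simp
    have IIw: "andreIIw (Psi m t @ a # Psi m u)"
    proof -
      have "Psi m t = [] \<or> Min (set (Psi m u)) < Min (set (Psi m t))"
      proof (cases "l = []")
        case True then show ?thesis using t0 by simp
      next
        case False
        have "Min (set t) = Min (set l) + b" unfolding t_def using shift_Min[OF False] .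
        moreover have "a < Min (set l)" using lg False by simp
        ultimately show ?thesis using IHt[OF False] IHu Minu by simp
      qed
      moreover have "andreIIw (Psi m t)" using IHt t0 by (cases "l = []") (auto simp: andreIIw_short)
      moreover have "Psi m u \<noteq> []" using IHu ue by auto
      ultimately show ?thesis using andreIIw_split[OF lg' rg'] IHu by simp
    qed
    have lw: "length w = Suc (length l + length r)" using arg_cong[OF wd, of length] by simp
    have lt: "length (Psi m t) = length l" using IHt t0 unfolding t_def by (cases "l = []") auto
    have m1: "Min (set (Psi m w)) = Min (set w)" using Psiw sp a_def by simp
    have m2: "length (Psi m w) = length w" using Psiw lt IHu lw unfolding u_def by simp
    have gt: "good m (Psi m t)" using IHt t0 by (cases "l = []") (auto simp: good_def)
    have m3: "good m (Psi m w)" using Psiw gt IHu gl(3) unfolding good_def by auto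
    show ?thesis using m1 m2 m3 Psiw IIw by simp
  qed
qed


lemma Phi_split:
  assumes "\<forall>x\<in>set L. a < x" "\<forall>x\<in>set R. a \<le> x" "R \<noteq> []"
  shows "Phi m (L @ a # R) = shift (-(Min (set (Phi m R)) - a)) (Phi m L) @ a #
           shift (m - (Min (set (Phi m R)) - a) - Max (set (Phi m R))) (Phi m R)"
  using split_parts[OF assms(1,2)] assms(3) by (subst Phi.simps) (simp add: Let_def)

lemma Psi_split:
  assumes "\<forall>x\<in>set L. a < x" "\<forall>x\<in>set R. a \<le> x" "R \<noteq> []"
  shows "Psi m (L @ a # R) = Psi m (shift (m - Max (set R)) L) @ a #
           Psi m (shift (a + (m - Max (set R)) - Min (set R)) R)"
  using split_parts[OF assms(1,2)] assms(3) by (subst Psi.simps) (simp add: Let_def)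

lemma Psi_Phi: "andreIIw w \<Longrightarrow> good m w \<Longrightarrow> Psi m (Phi m w) = w"
proof (induction m w rule: Phi.induct)
  case (1 m w)
  show ?case
  proof (cases "length w \<le> 1")
    case True
    then show ?thesis by (simp add: Phi_short Psi_short)
  next
    case False
    note lw1 = False
    define a where "a = Min (set w)"
    define l where "l = left_part w"
    define r where "r = right_part w"
    have w: "w \<noteq> []" using False by auto
    have wd: "w = l @ a # r" using lr_decomp[OF w] unfolding a_def l_def r_def by simp
    have lg: "\<forall>x\<in>set l. a < x" unfolding l_def a_def using left_gt by blast
    have rg: "\<forall>x\<in>set r. a \<le> x" unfolding r_def a_def using right_ge by blast
    note II = andreIIw_parts[OF "1.prems"(1) False, folded l_def r_def]
    have gl: "good m l" "good m r" "a \<le> m" using "1.prems"(2) wd unfolding good_def by auto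
    define t where "t = Phi m l"
    define u where "u = Phi m r"
    have Pr: "length u = length r \<and> Min (set u) = Min (set r) \<and> good m u \<and> andreI u \<and> Des u = Des r"
      using Phi_props[OF II(2) II(3) gl(2)] unfolding u_def .
    have Pl: "l \<noteq> [] \<Longrightarrow> length t = length l \<and> Min (set t) = Min (set l) \<and> good m t \<and> andreI t \<and> Des t = Des l"
      using Phi_props[OF II(1) _ gl(1)] unfolding t_def by blast
    have t0: "l = [] \<Longrightarrow> t = []" unfolding t_def by (simp add: Phi_short)
    define b where "b = Min (set u) - a"
    define c where "c = m - b - Max (set u)"
    have ue: "u \<noteq> []" using Pr II by auto
    have Phiw: "Phi m w = shift (-b) t @ a # shift c u"
      unfolding wd b_def c_def t_def u_def by (rule Phi_split[OF lg rg II(3)])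
    have b0: "0 \<le> b" unfolding b_def using Pr rg II(3) by simp
    have Mu: "Max (set u) \<le> m" using Pr ue good_Max by blast
    have lg': "\<forall>x\<in>set (shift (-b) t). a < x"
    proof
      fix x assume "x \<in> set (shift (-b) t)"
      then obtain y where y: "y \<in> set t" "x = y - b" by auto
      then have "l \<noteq> []" using t0 by auto
      then have "Min (set t) = Min (set l)" "Min (set r) < Min (set l)" using Pl II by auto
      moreover have "Min (set t) \<le> y" using y by simp
      ultimately show "a < x" using y Pr unfolding b_def by simp
    qed
    have rg': "\<forall>x\<in>set (shift c u). a \<le> x"
    proof
      fix x assume "x \<in> set (shift c u)"
      then obtain y where y: "y \<in> set u" "x = y + c" by auto
      have "Min (set u) \<le> y" using y by simp
      then show "a \<le> x" using y Mu unfolding c_def b_def by linarith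
    qed
    have Mr': "Max (set (shift c u)) = m - b" using shift_Max[OF ue] unfolding c_def by simp
    have Mi': "Min (set (shift c u)) = a + b + c" using shift_Min[OF ue] unfolding b_def by simp
    have "Psi m (Phi m w) = Psi m (shift b (shift (-b) t)) @ a # Psi m (shift (-c) (shift c u))"
      unfolding Phiw using Psi_split[OF lg' rg'] ue Mr' Mi' by simp
    also have "\<dots> = Psi m t @ a # Psi m u" by simp
    also have "Psi m t = l"
    proof (cases "l = []")
      case True then show ?thesis using t0 by (simp add: Psi_short)
    next
      case False
      show ?thesis using "1.IH"(1)[OF lw1] II gl unfolding t_def l_def by simp
    qed
    also have "Psi m u = r" using "1.IH"(2)[OF lw1] II gl unfolding u_def r_def by simp
    finally show ?thesis using wd by simp
  qed
qed

lemma Phi_Psi: "andreI w \<Longrightarrow> good m w \<Longrightarrow> Phi m (Psi m w) = w"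
proof (induction m w rule: Psi.induct)
  case (1 m w)
  show ?case
  proof (cases "length w \<le> 1")
    case True
    then show ?thesis by (simp add: Phi_short Psi_short)
  next
    case False
    note lw1 = False
    define a where "a = Min (set w)"
    define l where "l = left_part w"
    define r where "r = right_part w"
    have w: "w \<noteq> []" using False by auto
    have wd: "w = l @ a # r" using lr_decomp[OF w] unfolding a_def l_def r_def by simp
    have lg: "\<forall>x\<in>set l. a < x" unfolding l_def a_def using left_gt by blast
    have rg: "\<forall>x\<in>set r. a \<le> x" unfolding r_def a_def using right_ge by blast
    note I = andreI_parts[OF "1.prems"(1) False, folded l_def r_def]
    have gl: "good m l" "good m r" "a \<le> m" using "1.prems"(2) wd unfolding good_def by auto
    define b where "b = m - Max (set r)"
    define t where "t = shift b l"
    define u where "u = shift (a + b - Min (set r)) r"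
    have Psiw: "Psi m w = Psi m t @ a # Psi m u"
      unfolding wd t_def u_def b_def by (rule Psi_split[OF lg rg I(3)])
    have b0: "0 \<le> b" unfolding b_def using gl(2) I(3) good_Max by simp
    have Mr: "Max (set r) \<le> m" using gl(2) I(3) good_Max by simp
    have ue: "u \<noteq> []" unfolding u_def using I by simp
    have Minu: "Min (set u) = a + b" unfolding u_def using shift_Min[OF I(3)] by simp
    have Maxu: "Max (set u) = m + a - Min (set r)" unfolding u_def b_def using shift_Max[OF I(3)] by simp
    have Minr: "a \<le> Min (set r)" using rg I(3) by simp
    have gu: "good m u" using Maxu Minr ue by (simp add: good_Max)
    have Pu: "length (Psi m u) = length u \<and> Min (set (Psi m u)) = Min (set u) \<and> good m (Psi m u) \<and> andreIIw (Psi m u)"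
      using Psi_props[of u m] I gu ue unfolding u_def by simp
    have gt: "l \<noteq> [] \<Longrightarrow> good m t" using I(4) Mr unfolding t_def b_def by (simp add: good_Max shift_Max)
    have Pt: "l \<noteq> [] \<Longrightarrow> length (Psi m t) = length t \<and> Min (set (Psi m t)) = Min (set t) \<and> good m (Psi m t) \<and> andreIIw (Psi m t)"
      using Psi_props[of t m] I gt unfolding t_def by simp
    have t0: "l = [] \<Longrightarrow> Psi m t = []" unfolding t_def by (simp add: Psi_short)
    have lg': "\<forall>x\<in>set (Psi m t). a < x"
    proof
      fix x assume x: "x \<in> set (Psi m t)"
      then have le: "l \<noteq> []" using t0 by auto
      have "Min (set (Psi m t)) \<le> x" using x by simp
      moreover have "Min (set t) = Min (set l) + b" unfolding t_def using shift_Min[OF le] .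
      moreover have "a < Min (set l)" using lg le by simp
      ultimately show "a < x" using Pt[OF le] b0 by simp
    qed
    have rg': "\<forall>x\<in>set (Psi m u). a \<le> x"
    proof
      fix x assume x: "x \<in> set (Psi m u)"
      have "Min (set (Psi m u)) \<le> x" using x by simp
      then show "a \<le> x" using Pu Minu b0 by simp
    qed
    have ue': "Psi m u \<noteq> []" using Pu ue by auto
    have PPu: "Phi m (Psi m u) = u"
      using "1.IH"(2)[OF lw1, of a l r b] I gu unfolding u_def a_def l_def r_def b_def by simp
    have PPt: "Phi m (Psi m t) = t"
    proof (cases "l = []")
      case True then show ?thesis using t0 unfolding t_def by (simp add: Phi_short)
    next
      case False
      show ?thesis using "1.IH"(1)[OF lw1, of a l r b] I gt[OF False] unfolding t_def a_def l_def r_def b_def by simp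
    qed
    have "Phi m (Psi m w) = shift (-(Min (set u) - a)) t @ a # shift (m - (Min (set u) - a) - Max (set u)) u"
      unfolding Psiw using Phi_split[OF lg' rg' ue'] PPu PPt by simp
    also have "\<dots> = l @ a # r" using Minu Maxu unfolding t_def u_def by simp
    finally show ?thesis using wd by simp
  qed
qed

definition posrel :: "int list \<Rightarrow> int list \<Rightarrow> bool" where
  "posrel F S \<longleftrightarrow> length F = length S \<and>
     (\<forall>i j. i < length S \<longrightarrow> j < length S \<longrightarrow> (S ! i < S ! j \<longleftrightarrow> (F ! i < F ! j \<or> (F ! i = F ! j \<and> i < j))))"

lemma posrelD: "posrel F S \<Longrightarrow> i < length S \<Longrightarrow> j < length S \<Longrightarrow> (S ! i < S ! j \<longleftrightarrow> (F ! i < F ! j \<or> (F ! i = F ! j \<and> i < j)))"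
  unfolding posrel_def by blast

lemma posrel_len: "posrel F S \<Longrightarrow> length F = length S"
  unfolding posrel_def by blast

lemma posrel_distinct: "posrel F S \<Longrightarrow> distinct S"
proof -
  assume p: "posrel F S"
  show "distinct S"
  proof (subst distinct_conv_nth, intro allI impI)
    fix i j assume ij: "i < length S" "j < length S" "i \<noteq> j"
    show "S ! i \<noteq> S ! j"
    proof
      assume e: "S ! i = S ! j"
      have "\<not> S ! i < S ! j" "\<not> S ! j < S ! i" using e by auto
      then show False using posrelD[OF p ij(1,2)] posrelD[OF p ij(2,1)] ij(3) by auto
    qed
  qed
qed

lemma posrel_sub:
  assumes p: "posrel F S" and g: "\<And>i j. i < j \<Longrightarrow> j < m \<Longrightarrow> g i < g j" and gm: "\<And>i. i < m \<Longrightarrow> g i < length S"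
  shows "posrel (map (\<lambda>i. F ! g i) [0..<m]) (map (\<lambda>i. S ! g i) [0..<m])"
  unfolding posrel_def
proof (intro conjI allI impI)
  fix i j assume ij: "i < length (map (\<lambda>i. S ! g i) [0..<m])" "j < length (map (\<lambda>i. S ! g i) [0..<m])"
  then have ij': "i < m" "j < m" by auto
  have "(i < j) = (g i < g j)"
    using g ij' by (metis less_asym nat_neq_iff)
  then show "(map (\<lambda>i. S ! g i) [0..<m] ! i < map (\<lambda>i. S ! g i) [0..<m] ! j) =
         (map (\<lambda>i. F ! g i) [0..<m] ! i < map (\<lambda>i. F ! g i) [0..<m] ! j \<or>
          map (\<lambda>i. F ! g i) [0..<m] ! i = map (\<lambda>i. F ! g i) [0..<m] ! j \<and> i < j)"
    using posrelD[OF p gm[OF ij'(1)] gm[OF ij'(2)]] ij' by simp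
qed simp

lemma take_as_map: "k \<le> length xs \<Longrightarrow> take k xs = map (\<lambda>i. xs ! i) [0..<k]"
  by (simp add: list_eq_iff_nth_eq)

lemma drop_as_map: "drop k xs = map (\<lambda>i. xs ! (i + k)) [0..<length xs - k]"
  by (simp add: list_eq_iff_nth_eq add.commute)

lemma remove_as_map: "k < length xs \<Longrightarrow> take k xs @ drop (Suc k) xs = map (\<lambda>i. xs ! (if i < k then i else Suc i)) [0..<length xs - 1]"
  by (auto simp: list_eq_iff_nth_eq nth_append min_def)

lemma posrel_take: "posrel F S \<Longrightarrow> posrel (take k F) (take k S)"
proof -
  assume p: "posrel F S"
  show ?thesis
  proof (cases "k \<le> length S")
    case True
    then have "posrel (map (\<lambda>i. F ! i) [0..<k]) (map (\<lambda>i. S ! i) [0..<k])"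
      using posrel_sub[OF p, where g = id and m = k] by simp
    then show ?thesis using True posrel_len[OF p] by (simp add: take_as_map)
  next
    case False
    then show ?thesis using p posrel_len[OF p] by simp
  qed
qed

lemma posrel_drop: "posrel F S \<Longrightarrow> posrel (drop k F) (drop k S)"
proof -
  assume p: "posrel F S"
  show ?thesis
    using posrel_sub[OF p, where g = "\<lambda>i. i + k" and m = "length S - k"] posrel_len[OF p]
    by (simp add: drop_as_map)
qed

lemma posrel_remove: "posrel F S \<Longrightarrow> k < length S \<Longrightarrow> posrel (take k F @ drop (Suc k) F) (take k S @ drop (Suc k) S)"
proof -
  assume p: "posrel F S" and k: "k < length S"
  have "posrel (map (\<lambda>i. F ! (if i < k then i else Suc i)) [0..<length S - 1]) (map (\<lambda>i. S ! (if i < k then i else Suc i)) [0..<length S - 1])"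
    by (rule posrel_sub[OF p]) auto
  then show ?thesis using remove_as_map[OF k] remove_as_map[of k F] k posrel_len[OF p] by simp
qed


lemma distinct_nth_eq_iff: "distinct xs \<Longrightarrow> i < length xs \<Longrightarrow> j < length xs \<Longrightarrow> (xs ! i = xs ! j) = (i = j)"
  by (simp add: nth_eq_iff_index_eq)

lemma CE_max:
  assumes p: "posrel X Y" and ne: "X \<noteq> []" and k: "k \<le> length X"
  shows "(Max (set X) \<in> set (drop k X)) = (Max (set Y) \<in> set (drop k Y))"
proof -
  have len: "length X = length Y" using posrel_len[OF p] .
  have dY: "distinct Y" using posrel_distinct[OF p] .
  have Yne: "Y \<noteq> []" using ne len by auto
  obtain j0 where j0: "j0 < length Y" "Y ! j0 = Max (set Y)"
    using Max_in[of "set Y"] Yne by (auto simp: in_set_conv_nth)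
  have Yless: "\<And>i. i < length Y \<Longrightarrow> i \<noteq> j0 \<Longrightarrow> Y ! i < Y ! j0"
  proof -
    fix i assume i: "i < length Y" "i \<noteq> j0"
    have "Y ! i \<le> Y ! j0" using j0 i by simp
    moreover have "Y ! i \<noteq> Y ! j0" using distinct_nth_eq_iff[OF dY i(1) j0(1)] i by simp
    ultimately show "Y ! i < Y ! j0" by simp
  qed
  have Xle: "\<And>i. i < length Y \<Longrightarrow> X ! i \<le> X ! j0 \<and> (X ! i = X ! j0 \<longrightarrow> i \<le> j0)"
  proof -
    fix i assume i: "i < length Y"
    show "X ! i \<le> X ! j0 \<and> (X ! i = X ! j0 \<longrightarrow> i \<le> j0)"
    proof (cases "i = j0")
      case True then show ?thesis by simp
    next
      case False
      then show ?thesis using Yless[OF i False] posrelD[OF p i j0(1)] by auto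
    qed
  qed
  have MX: "Max (set X) = X ! j0"
  proof (rule Max_eqI)
    fix y assume "y \<in> set X"
    then obtain i where "i < length X" "y = X ! i" by (auto simp: in_set_conv_nth)
    then show "y \<le> X ! j0" using Xle len by auto
  qed (use j0 len in auto)
  have L: "(Max (set X) \<in> set (drop k X)) = (k \<le> j0)"
  proof
    assume "Max (set X) \<in> set (drop k X)"
    then obtain i where i: "i < length X - k" "drop k X ! i = Max (set X)" by (auto simp: in_set_conv_nth)
    then have "X ! (k + i) = X ! j0" "k + i < length Y" using k MX len by auto
    then show "k \<le> j0" using Xle by fastforce
  next
    assume "k \<le> j0"
    then have "drop k X ! (j0 - k) = X ! j0" "j0 - k < length (drop k X)" using j0 len k by auto
    then show "Max (set X) \<in> set (drop k X)" using MX by (metis nth_mem)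
  qed
  have R: "(Max (set Y) \<in> set (drop k Y)) = (k \<le> j0)"
  proof
    assume "Max (set Y) \<in> set (drop k Y)"
    then obtain i where i: "i < length Y - k" "drop k Y ! i = Max (set Y)" by (auto simp: in_set_conv_nth)
    then have "Y ! (k + i) = Y ! j0" "k + i < length Y" using k j0 len by auto
    then have "k + i = j0" using distinct_nth_eq_iff[OF dY _ j0(1)] by blast
    then show "k \<le> j0" by simp
  next
    assume "k \<le> j0"
    then have "drop k Y ! (j0 - k) = Y ! j0" "j0 - k < length (drop k Y)" using j0 len k by auto
    then show "Max (set Y) \<in> set (drop k Y)" using j0 by (metis nth_mem)
  qed
  show ?thesis using L R by simp
qed

lemma CE_min:
  assumes p: "posrel X Y" and ne: "X \<noteq> []" and k: "k \<le> length X"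
  shows "(Min (set Y) \<in> set (drop k Y)) =
     (drop k X \<noteq> [] \<and> (take k X = [] \<or> Min (set (drop k X)) < Min (set (take k X))))"
proof -
  have len: "length X = length Y" using posrel_len[OF p] .
  have dY: "distinct Y" using posrel_distinct[OF p] .
  have Yne: "Y \<noteq> []" using ne len by auto
  obtain j0 where j0: "j0 < length Y" "Y ! j0 = Min (set Y)"
    using Min_in[of "set Y"] Yne by (auto simp: in_set_conv_nth)
  have Yless: "\<And>i. i < length Y \<Longrightarrow> i \<noteq> j0 \<Longrightarrow> Y ! j0 < Y ! i"
  proof -
    fix i assume i: "i < length Y" "i \<noteq> j0"
    have "Y ! j0 \<le> Y ! i" using j0 i by simp
    moreover have "Y ! i \<noteq> Y ! j0" using distinct_nth_eq_iff[OF dY i(1) j0(1)] i by simp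
    ultimately show "Y ! j0 < Y ! i" by simp
  qed
  have Xge: "\<And>i. i < length Y \<Longrightarrow> X ! j0 \<le> X ! i \<and> (i < j0 \<longrightarrow> X ! j0 < X ! i)"
  proof -
    fix i assume i: "i < length Y"
    show "X ! j0 \<le> X ! i \<and> (i < j0 \<longrightarrow> X ! j0 < X ! i)"
    proof (cases "i = j0")
      case True then show ?thesis by simp
    next
      case False
      then show ?thesis using Yless[OF i False] posrelD[OF p j0(1) i] by auto
    qed
  qed
  have MX: "Min (set X) = X ! j0"
  proof (rule Min_eqI)
    fix y assume "y \<in> set X"
    then obtain i where "i < length X" "y = X ! i" by (auto simp: in_set_conv_nth)
    then show "X ! j0 \<le> y" using Xge len by auto
  qed (use j0 len in auto)
  have R: "(Min (set Y) \<in> set (drop k Y)) = (k \<le> j0)"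
  proof
    assume "Min (set Y) \<in> set (drop k Y)"
    then obtain i where i: "i < length Y - k" "drop k Y ! i = Min (set Y)" by (auto simp: in_set_conv_nth)
    then have "Y ! (k + i) = Y ! j0" "k + i < length Y" using k j0 len by auto
    then have "k + i = j0" using distinct_nth_eq_iff[OF dY _ j0(1)] by blast
    then show "k \<le> j0" by simp
  next
    assume "k \<le> j0"
    then have "drop k Y ! (j0 - k) = Y ! j0" "j0 - k < length (drop k Y)" using j0 len k by auto
    then show "Min (set Y) \<in> set (drop k Y)" using j0 by (metis nth_mem)
  qed
  have L: "(drop k X \<noteq> [] \<and> (take k X = [] \<or> Min (set (drop k X)) < Min (set (take k X)))) = (k \<le> j0)"
  proof
    assume A: "drop k X \<noteq> [] \<and> (take k X = [] \<or> Min (set (drop k X)) < Min (set (take k X)))"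
    show "k \<le> j0"
    proof (rule ccontr)
      assume "\<not> k \<le> j0"
      then have jk: "j0 < k" by simp
      then have "take k X \<noteq> []" "X ! j0 \<in> set (take k X)" using j0 len k
        by (auto simp: in_set_conv_nth intro!: exI[of _ j0])
      then have "Min (set (take k X)) \<le> Min (set X)" using MX by simp
      moreover have "Min (set X) \<le> Min (set (drop k X))"
        using A set_drop_subset[of k X] by (intro Min_antimono) auto
      ultimately show False using A \<open>take k X \<noteq> []\<close> by simp
    qed
  next
    assume kj: "k \<le> j0"
    have dne: "drop k X \<noteq> []" using kj j0 len by simp
    have "drop k X ! (j0 - k) = X ! j0" "j0 - k < length (drop k X)" using j0 len kj by auto
    then have "X ! j0 \<in> set (drop k X)" by (metis nth_mem)
    then have md: "Min (set (drop k X)) \<le> X ! j0" by simp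
    have mt: "take k X \<noteq> [] \<Longrightarrow> X ! j0 < Min (set (take k X))"
    proof -
      assume tne: "take k X \<noteq> []"
      have "\<forall>y\<in>set (take k X). X ! j0 < y"
      proof
        fix y assume "y \<in> set (take k X)"
        then obtain i where "i < length (take k X)" "y = take k X ! i" by (auto simp: in_set_conv_nth)
        then have "i < k" "y = X ! i" "i < length Y" using len by auto
        then show "X ! j0 < y" using Xge kj by auto
      qed
      then show ?thesis using tne by simp
    qed
    show "drop k X \<noteq> [] \<and> (take k X = [] \<or> Min (set (drop k X)) < Min (set (take k X)))"
    proof (cases "take k X = []")
      case True then show ?thesis using dne by blast
    next
      case False
      then have "Min (set (drop k X)) < Min (set (take k X))" using mt md by linarith
      then show ?thesis using dne by blast
    qed
  qed
  show ?thesis using L R by simp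
qed


lemma posrel_split:
  assumes p: "posrel F S" and ne: "F \<noteq> []"
  shows "length (left_part F) < length F \<and> left_part F = take (length (left_part F)) F
    \<and> right_part F = drop (Suc (length (left_part F))) F
    \<and> left_part S = take (length (left_part F)) S \<and> right_part S = drop (Suc (length (left_part F))) S
    \<and> (\<forall>x\<in>set (take (length (left_part F)) F). F ! length (left_part F) < x)
    \<and> (\<forall>x\<in>set (drop (Suc (length (left_part F))) F). F ! length (left_part F) \<le> x)
    \<and> (\<forall>x\<in>set (take (length (left_part F)) S). S ! length (left_part F) < x)
    \<and> (\<forall>x\<in>set (drop (Suc (length (left_part F))) S). S ! length (left_part F) \<le> x)"
proof -
  define k where "k = length (left_part F)"
  define lF where "lF = left_part F"
  define rF where "rF = right_part F"
  define m where "m = Min (set F)"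
  have Fd: "F = lF @ m # rF" using lr_decomp[OF ne] unfolding lF_def rF_def m_def by simp
  have len: "length F = length S" using posrel_len[OF p] .
  have kl: "k < length F" unfolding k_def using left_part_shorter[OF ne] .
  have kk: "k = length lF" unfolding k_def lF_def ..
  have tk: "take k F = lF" "drop (Suc k) F = rF" "F ! k = m"
    using arg_cong[OF Fd, of "take k"] arg_cong[OF Fd, of "drop (Suc k)"] arg_cong[OF Fd, of "\<lambda>xs. xs ! k"]
    unfolding kk by simp_all
  have lg: "\<forall>x\<in>set lF. m < x" unfolding lF_def m_def using left_gt by blast
  have rg: "\<forall>x\<in>set rF. m \<le> x" unfolding rF_def m_def using right_ge by blast
  have Fi1: "\<And>i. i < k \<Longrightarrow> F ! k < F ! i"
  proof -
    fix i assume "i < k"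
    then have "F ! i \<in> set (take k F)" using kl by (auto simp: in_set_conv_nth intro!: exI[of _ i])
    then show "F ! k < F ! i" using tk lg by auto
  qed
  have Fi2: "\<And>i. k < i \<Longrightarrow> i < length F \<Longrightarrow> F ! k \<le> F ! i"
    using tk(3) unfolding m_def by simp
  have S1: "\<forall>x\<in>set (take k S). S ! k < x"
  proof
    fix x assume "x \<in> set (take k S)"
    then obtain i where i: "i < k" "x = S ! i" using kl len by (auto simp: in_set_conv_nth)
    then show "S ! k < x" using posrelD[OF p, of k i] Fi1[OF i(1)] kl len by simp
  qed
  have S2: "\<forall>x\<in>set (drop (Suc k) S). S ! k \<le> x"
  proof
    fix x assume "x \<in> set (drop (Suc k) S)"
    then obtain i where i: "i < length S - Suc k" "x = drop (Suc k) S ! i" by (auto simp: in_set_conv_nth)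
    then have x: "x = S ! (Suc k + i)" "Suc k + i < length S" using kl len by auto
    have "F ! k \<le> F ! (Suc k + i)" using Fi2 x len by simp
    then have "S ! k < S ! (Suc k + i)" using posrelD[OF p, of k "Suc k + i"] kl len x by auto
    then show "S ! k \<le> x" using x by simp
  qed
  have Sd: "S = take k S @ S ! k # drop (Suc k) S" using kl len by (simp add: id_take_nth_drop)
  have "left_part S = take k S" "right_part S = drop (Suc k) S"
    using split_parts(2,3)[OF S1 S2] Sd by simp_all
  then show ?thesis using kl tk S1 S2 lg rg unfolding k_def lF_def rF_def m_def by simp
qed

lemma posrel_andre:
  "posrel F S \<Longrightarrow> (andreI F = andreI S) \<and> (andreIIw F = andreII S)"
proof (induction "length F" arbitrary: F S rule: less_induct)
  case less
  show ?case
  proof (cases "length F \<le> 1")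
    case True
    then have "length S \<le> 1" using posrel_len[OF less.prems] by simp
    then show ?thesis using True by (simp add: andreI_short andreII_short andreIIw_short)
  next
    case False
    have ne: "F \<noteq> []" using False by auto
    define k where "k = length (left_part F)"
    note sp0 = posrel_split[OF less.prems ne, folded k_def]
    have kF: "k < length F" and lpF: "left_part F = take k F" and rpF: "right_part F = drop (Suc k) F"
      and lpS: "left_part S = take k S" and rpS: "right_part S = drop (Suc k) S"
      and g1: "\<forall>x\<in>set (take k F). F ! k < x" and g2: "\<forall>x\<in>set (drop (Suc k) F). F ! k \<le> x"
      and g3: "\<forall>x\<in>set (take k S). S ! k < x" and g4: "\<forall>x\<in>set (drop (Suc k) S). S ! k \<le> x"
      using sp0 by blast+
    note sp = kF lpF rpF lpS rpS
    have len: "length F = length S" using posrel_len[OF less.prems] .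
    have Fd: "F = take k F @ F ! k # drop (Suc k) F" using sp by (simp add: id_take_nth_drop)
    have Sd: "S = take k S @ S ! k # drop (Suc k) S" using sp len by (simp add: id_take_nth_drop)
    have IH1: "andreI (take k F) = andreI (take k S) \<and> andreIIw (take k F) = andreII (take k S)"
      using less.hyps[of "take k F" "take k S"] posrel_take[OF less.prems] sp by simp
    have IH2: "andreI (drop (Suc k) F) = andreI (drop (Suc k) S) \<and> andreIIw (drop (Suc k) F) = andreII (drop (Suc k) S)"
      using less.hyps[of "drop (Suc k) F" "drop (Suc k) S"] posrel_drop[OF less.prems] sp ne by simp
    define X where "X = take k F @ drop (Suc k) F"
    define Y where "Y = take k S @ drop (Suc k) S"
    have pXY: "posrel X Y" unfolding X_def Y_def using posrel_remove[OF less.prems] sp len by simp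
    have Xne: "X \<noteq> []" unfolding X_def using False sp by (cases F) auto
    have kX: "k \<le> length X" unfolding X_def using sp by simp
    have dX: "drop k X = drop (Suc k) F" "take k X = take k F" unfolding X_def using sp by simp_all
    have dY: "drop k Y = drop (Suc k) S" "take k Y = take k S" unfolding Y_def using sp len by simp_all
    have c1: "(Max (set (take k F @ drop (Suc k) F)) \<in> set (drop (Suc k) F)) =
              (Max (set (take k S @ drop (Suc k) S)) \<in> set (drop (Suc k) S))"
      using CE_max[OF pXY Xne kX] dX dY unfolding X_def Y_def by simp
    have c2: "(Min (set (take k S @ drop (Suc k) S)) \<in> set (drop (Suc k) S)) =
      (drop (Suc k) F \<noteq> [] \<and> (take k F = [] \<or> Min (set (drop (Suc k) F)) < Min (set (take k F))))"
      using CE_min[OF pXY Xne kX] unfolding dX dY unfolding Y_def .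
    have FnS: "\<not> (take k S = [] \<and> drop (Suc k) S = [])"
    proof
      assume "take k S = [] \<and> drop (Suc k) S = []"
      then have "k = 0 \<or> S = []" "length S \<le> Suc k" by (simp_all only: take_eq_Nil drop_eq_Nil)
      then show False using False len by auto
    qed
    have FnF: "\<not> (take k F = [] \<and> drop (Suc k) F = [])"
    proof
      assume "take k F = [] \<and> drop (Suc k) F = []"
      then have "k = 0 \<or> F = []" "length F \<le> Suc k" by (simp_all only: take_eq_Nil drop_eq_Nil)
      then show False using False len by auto
    qed
    have aI: "andreI F = andreI S"
      apply (subst Fd, subst Sd)
      apply (subst andreI_split[OF g1 g2])
      apply (subst andreI_split[OF g3 g4])
      apply (simp only: if_not_P[OF FnF] if_not_P[OF FnS])
      using IH1 IH2 c1 by simp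
    have aII: "andreIIw F = andreII S"
      apply (subst Fd, subst Sd)
      apply (subst andreIIw_split[OF g1 g2])
      apply (subst andreII_split[OF g3 g4])
      apply (simp only: if_not_P[OF FnF] if_not_P[OF FnS])
      using IH1 IH2 c2 by simp
    show ?thesis using aI aII by simp
  qed
qed

lemma posrel_Des: "posrel F S \<Longrightarrow> Des F = Des S"
proof (rule Des_cong)
  assume p: "posrel F S"
  show "length F = length S" using posrel_len[OF p] .
  fix i assume i: "Suc i < length S"
  show "(F ! i > F ! Suc i) = (S ! i > S ! Suc i)"
    using posrelD[OF p, of "Suc i" i] i by auto
qed

lemma perm_rank:
  assumes d: "distinct S" and s: "set S = {1..int (length S)}" and i: "i < length S"
  shows "S ! i = int (card {j. j < length S \<and> S ! j < S ! i}) + 1"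
proof -
  have inj: "inj_on (\<lambda>j. S ! j) {j. j < length S \<and> S ! j < S ! i}"
    using d by (auto simp: inj_on_def nth_eq_iff_index_eq)
  have img: "(\<lambda>j. S ! j) ` {j. j < length S \<and> S ! j < S ! i} = {v \<in> set S. v < S ! i}"
    by (auto simp: in_set_conv_nth)
  have Si: "S ! i \<in> {1..int (length S)}" using s i by (metis nth_mem)
  have "{v \<in> set S. v < S ! i} = {1..S ! i - 1}" using s Si by auto
  then have "card {j. j < length S \<and> S ! j < S ! i} = card {1..S ! i - 1}"
    using card_image[OF inj] img by simp
  also have "\<dots> = nat (S ! i - 1)" by simp
  finally show ?thesis using Si by simp
qed

definition perms_of :: "nat \<Rightarrow> int list \<Rightarrow> bool" where
  "perms_of n S \<longleftrightarrow> distinct S \<and> set S = {1..int n}"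

lemma perms_of_len: "perms_of n S \<Longrightarrow> length S = n"
  unfolding perms_of_def using distinct_card[of S] by auto

lemma perms_eq: "perms n = {S. perms_of n S}" unfolding perms_def perms_of_def by auto

lemma posrel_unique:
  assumes "posrel F S" "posrel F S'" "perms_of n S" "perms_of n S'"
  shows "S = S'"
proof -
  have l: "length S = n" "length S' = n" using perms_of_len assms(3,4) by auto
  show ?thesis
  proof (rule nth_equalityI)
    show "length S = length S'" using l by simp
    fix i assume i: "i < length S"
    have "{j. j < length S \<and> S ! j < S ! i} = {j. j < length S' \<and> S' ! j < S' ! i}"
      using posrelD[OF assms(1) _ i] posrelD[OF assms(2), of _ i] l i by auto
    then show "S ! i = S' ! i"
      using perm_rank[of S i] perm_rank[of S' i] assms(3,4) l i unfolding perms_of_def by simp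
  qed
qed

definition lexlt :: "int list \<Rightarrow> nat \<Rightarrow> nat \<Rightarrow> bool" where
  "lexlt F j i \<longleftrightarrow> F ! j < F ! i \<or> (F ! j = F ! i \<and> j < i)"

definition stdz :: "int list \<Rightarrow> int list" where
  "stdz F = map (\<lambda>i. int (card {j. j < length F \<and> lexlt F j i}) + 1) [0..<length F]"

lemma stdz_posrel: "posrel F (stdz F)"
  unfolding posrel_def
proof (intro conjI allI impI)
  show "length F = length (stdz F)" by (simp add: stdz_def)
  fix i j assume i: "i < length (stdz F)" and j: "j < length (stdz F)"
  let ?A = "\<lambda>i. {k. k < length F \<and> lexlt F k i}"
  have fin: "\<And>i. finite (?A i)" by simp
  have sub: "\<And>a b. a < length F \<Longrightarrow> lexlt F a b \<Longrightarrow> ?A a \<subset> ?A b"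
  proof -
    fix a b assume a: "a < length F" and ab: "lexlt F a b"
    have "?A a \<subseteq> ?A b" using ab unfolding lexlt_def by auto
    moreover have "a \<in> ?A b" using a ab by simp
    moreover have "a \<notin> ?A a" unfolding lexlt_def by simp
    ultimately show "?A a \<subset> ?A b" by blast
  qed
  have iF: "i < length F" "j < length F" using i j by (simp_all add: stdz_def)
  have eq: "stdz F ! i = int (card (?A i)) + 1" "stdz F ! j = int (card (?A j)) + 1"
    using i j by (simp_all add: stdz_def)
  show "(stdz F ! i < stdz F ! j) = (F ! i < F ! j \<or> F ! i = F ! j \<and> i < j)"
  proof
    assume "F ! i < F ! j \<or> F ! i = F ! j \<and> i < j"
    then have "lexlt F i j" unfolding lexlt_def .
    then have "card (?A i) < card (?A j)" by (rule psubset_card_mono[OF fin sub[OF iF(1)]])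
    then show "stdz F ! i < stdz F ! j" using eq by simp
  next
    assume lt: "stdz F ! i < stdz F ! j"
    show "F ! i < F ! j \<or> F ! i = F ! j \<and> i < j"
    proof (rule ccontr)
      assume "\<not> (F ! i < F ! j \<or> F ! i = F ! j \<and> i < j)"
      then have "i = j \<or> lexlt F j i" unfolding lexlt_def by auto
      then have "card (?A j) \<le> card (?A i)"
      proof
        assume "i = j" then show ?thesis by simp
      next
        assume "lexlt F j i"
        then have "card (?A j) < card (?A i)" by (rule psubset_card_mono[OF fin sub[OF iF(2)]])
        then show ?thesis by simp
      qed
      then show False using lt eq by simp
    qed
  qed
qed

lemma stdz_perm: "perms_of (length F) (stdz F)"
proof -
  have d: "distinct (stdz F)" using posrel_distinct[OF stdz_posrel] .
  have sub: "set (stdz F) \<subseteq> {1..int (length F)}"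
  proof
    fix x assume "x \<in> set (stdz F)"
    then obtain i where i: "i < length F" "x = int (card {j. j < length F \<and> lexlt F j i}) + 1"
      by (auto simp: stdz_def)
    have "card {j. j < length F \<and> lexlt F j i} \<le> card {j. j < length F \<and> j \<noteq> i}"
      by (intro card_mono) (auto simp: lexlt_def)
    also have "\<dots> < length F"
    proof -
      have "{j. j < length F \<and> j \<noteq> i} \<subset> {..<length F}" using i by auto
      then show ?thesis by (metis card_lessThan finite_lessThan psubset_card_mono)
    qed
    finally show "x \<in> {1..int (length F)}" using i by simp
  qed
  have "card (set (stdz F)) = length F" using distinct_card[OF d] by (simp add: stdz_def)
  then have "set (stdz F) = {1..int (length F)}"
    using sub by (intro card_subset_eq) auto
  then show ?thesis using d unfolding perms_of_def by simp
qed


definition pidx :: "int list \<Rightarrow> nat \<Rightarrow> nat" where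
  "pidx S v = (THE i. i < length S \<and> S ! i = int (Suc v))"

lemma pidx_props:
  assumes p: "perms_of n S" and v: "v < n"
  shows "pidx S v < n" "S ! pidx S v = int (Suc v)"
proof -
  have l: "length S = n" using perms_of_len[OF p] .
  have "int (Suc v) \<in> set S" using p v unfolding perms_of_def by auto
  then obtain i where i: "i < length S" "S ! i = int (Suc v)" by (auto simp: in_set_conv_nth)
  have d: "distinct S" using p unfolding perms_of_def by simp
  have "\<exists>!i. i < length S \<and> S ! i = int (Suc v)"
    using i d by (metis nth_eq_iff_index_eq)
  then have "pidx S v < length S \<and> S ! pidx S v = int (Suc v)"
    unfolding pidx_def by (rule theI')
  then show "pidx S v < n" "S ! pidx S v = int (Suc v)" using l by auto
qed

lemma pidx_inv:
  assumes p: "perms_of n S" and i: "i < n"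
  shows "nat (S ! i) - 1 < n" "pidx S (nat (S ! i) - 1) = i"
proof -
  have l: "length S = n" using perms_of_len[OF p] .
  have Si: "S ! i \<in> {1..int n}" using p i l unfolding perms_of_def by (metis nth_mem)
  then show v: "nat (S ! i) - 1 < n" by auto
  have d: "distinct S" using p unfolding perms_of_def by simp
  have e: "int (Suc (nat (S ! i) - 1)) = S ! i" using Si by auto
  have "S ! pidx S (nat (S ! i) - 1) = S ! i" "pidx S (nat (S ! i) - 1) < n"
    using pidx_props[OF p v] e by auto
  then show "pidx S (nat (S ! i) - 1) = i" using d l i nth_eq_iff_index_eq by blast
qed

lemma pidx_inj:
  assumes p: "perms_of n S" and "u < n" "v < n" "pidx S u = pidx S v"
  shows "u = v"
proof -
  have "int (Suc u) = int (Suc v)"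
    using pidx_props(2)[OF p assms(2)] pidx_props(2)[OF p assms(3)] assms(4) by metis
  then show ?thesis by simp
qed

definition iDesSet :: "int list \<Rightarrow> nat set" where
  "iDesSet S = {v. Suc v < length S \<and> pidx S (Suc v) < pidx S v}"

lemma ides_card:
  assumes p: "perms_of n S"
  shows "ides S = card (iDesSet S)"
proof -
  have l: "length S = n" using perms_of_len[OF p] .
  have iw: "\<And>k. k < n \<Longrightarrow> inv_word S ! k = int (Suc (pidx S k))"
    unfolding inv_word_def pidx_def using l by (simp del: upt_Suc)
  have li: "length (inv_word S) = n" unfolding inv_word_def using l by simp
  have "Des (inv_word S) = Suc ` iDesSet S"
  proof (intro set_eqI iffI)
    fix x assume "x \<in> Des (inv_word S)"
    then have x: "1 \<le> x" "x < n" "inv_word S ! (x - 1) > inv_word S ! x" unfolding Des_def li by auto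
    then have "pidx S x < pidx S (x - 1)" using iw[of x] iw[of "x - 1"] by simp
    then have "x - 1 \<in> iDesSet S" unfolding iDesSet_def using x l by simp
    then show "x \<in> Suc ` iDesSet S" using x by (metis Suc_diff_1 image_eqI less_le_trans zero_less_one)
  next
    fix x assume "x \<in> Suc ` iDesSet S"
    then obtain v where v: "x = Suc v" "Suc v < n" "pidx S (Suc v) < pidx S v"
      unfolding iDesSet_def l by auto
    then show "x \<in> Des (inv_word S)" unfolding Des_def li using iw[of v] iw[of "Suc v"] by simp
  qed
  then show ?thesis unfolding ides_def des_def by (simp add: card_image)
qed

definition SJ :: "nat \<Rightarrow> int \<Rightarrow> nat set \<Rightarrow> int list set" where
  "SJ n m J = {f. length f = n \<and> sorted f \<and> set f \<subseteq> {0..m} \<and> (\<forall>v. Suc v < n \<longrightarrow> v \<in> J \<longrightarrow> f ! v < f ! Suc v)}"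

definition fib :: "int list \<Rightarrow> int \<Rightarrow> int list set" where
  "fib S m = {F. length F = length S \<and> set F \<subseteq> {0..m} \<and> posrel F S}"

lemma chain_lemma:
  fixes f :: "int list" and P :: "nat \<Rightarrow> nat"
  assumes s: "sorted f" and st: "\<forall>v. Suc v < length f \<longrightarrow> v \<in> J \<longrightarrow> f ! v < f ! Suc v"
    and J: "\<And>v. Suc v < length f \<Longrightarrow> v \<notin> J \<Longrightarrow> P v < P (Suc v)"
  shows "u < v \<Longrightarrow> v < length f \<Longrightarrow> f ! u = f ! v \<Longrightarrow> P u < P v"
proof (induction v)
  case 0 then show ?case by simp
next
  case (Suc v)
  have a: "f ! u \<le> f ! v" "f ! v \<le> f ! Suc v"
    using sorted_nth_mono[OF s, of u v] sorted_nth_mono[OF s, of v "Suc v"] Suc.prems(1,2) by simp_all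
  have e: "f ! v = f ! Suc v" using a Suc.prems(3) by (metis order.antisym)
  then have nJ: "v \<notin> J" using st Suc.prems by fastforce
  have "P v < P (Suc v)" using J[OF Suc.prems(2) nJ] .
  show ?case
  proof (cases "u = v")
    case True then show ?thesis using \<open>P v < P (Suc v)\<close> by simp
  next
    case False
    then have "P u < P v" using Suc.IH Suc.prems e by simp
    then show ?thesis using \<open>P v < P (Suc v)\<close> by simp
  qed
qed


lemma posrel_iff_vals:
  assumes p: "perms_of n S" and lF: "length F = n"
  shows "posrel F S \<longleftrightarrow> (\<forall>u v. u < n \<longrightarrow> v < n \<longrightarrow>
     (u < v \<longleftrightarrow> (F ! pidx S u < F ! pidx S v \<or> (F ! pidx S u = F ! pidx S v \<and> pidx S u < pidx S v))))"
proof -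
  have l: "length S = n" using perms_of_len[OF p] .
  show ?thesis
  proof
    assume pr: "posrel F S"
    show "\<forall>u v. u < n \<longrightarrow> v < n \<longrightarrow>
     (u < v \<longleftrightarrow> (F ! pidx S u < F ! pidx S v \<or> (F ! pidx S u = F ! pidx S v \<and> pidx S u < pidx S v)))"
    proof (intro allI impI)
      fix u v assume uv: "u < n" "v < n"
      note pu = pidx_props[OF p uv(1)] and pv = pidx_props[OF p uv(2)]
      show "u < v \<longleftrightarrow> (F ! pidx S u < F ! pidx S v \<or> (F ! pidx S u = F ! pidx S v \<and> pidx S u < pidx S v))"
        using posrelD[OF pr, of "pidx S u" "pidx S v"] pu pv l by simp
    qed
  next
    assume Q: "\<forall>u v. u < n \<longrightarrow> v < n \<longrightarrow>
     (u < v \<longleftrightarrow> (F ! pidx S u < F ! pidx S v \<or> (F ! pidx S u = F ! pidx S v \<and> pidx S u < pidx S v)))"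
    show "posrel F S" unfolding posrel_def
    proof (intro conjI allI impI)
      show "length F = length S" using l lF by simp
      fix i j assume ij: "i < length S" "j < length S"
      define u where "u = nat (S ! i) - 1"
      define v where "v = nat (S ! j) - 1"
      have uv: "u < n" "v < n" "pidx S u = i" "pidx S v = j"
        using pidx_inv[OF p] ij l unfolding u_def v_def by auto
      have Su: "S ! i = int (Suc u)" "S ! j = int (Suc v)"
        using pidx_props(2)[OF p uv(1)] pidx_props(2)[OF p uv(2)] uv by auto
      show "(S ! i < S ! j) = (F ! i < F ! j \<or> F ! i = F ! j \<and> i < j)"
        using Q uv Su by auto
    qed
  qed
qed

lemma vals_iff_sorted:
  fixes f :: "int list" and P :: "nat \<Rightarrow> nat"
  assumes Pinj: "\<And>u v. u < length f \<Longrightarrow> v < length f \<Longrightarrow> P u = P v \<Longrightarrow> u = v"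
  shows "(\<forall>u v. u < length f \<longrightarrow> v < length f \<longrightarrow>
     (u < v \<longleftrightarrow> (f ! u < f ! v \<or> (f ! u = f ! v \<and> P u < P v))))
   \<longleftrightarrow> sorted f \<and> (\<forall>v. Suc v < length f \<longrightarrow> v \<in> {v. Suc v < length f \<and> P (Suc v) < P v} \<longrightarrow> f ! v < f ! Suc v)"
  (is "?L \<longleftrightarrow> ?R")
proof
  assume L: ?L
  have s: "sorted f"
  proof (subst sorted_iff_nth_Suc, intro allI impI)
    fix i assume "Suc i < length f"
    then show "f ! i \<le> f ! Suc i" using L[rule_format, of i "Suc i"] by auto
  qed
  moreover have "\<forall>v. Suc v < length f \<longrightarrow> v \<in> {v. Suc v < length f \<and> P (Suc v) < P v} \<longrightarrow> f ! v < f ! Suc v"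
  proof (intro allI impI)
    fix v assume v: "Suc v < length f" "v \<in> {v. Suc v < length f \<and> P (Suc v) < P v}"
    then show "f ! v < f ! Suc v" using L[rule_format, of v "Suc v"] by auto
  qed
  ultimately show ?R by blast
next
  assume R: ?R
  then have s: "sorted f" and st: "\<forall>v. Suc v < length f \<longrightarrow> v \<in> {v. Suc v < length f \<and> P (Suc v) < P v} \<longrightarrow> f ! v < f ! Suc v" by auto
  have J: "\<And>v. Suc v < length f \<Longrightarrow> v \<notin> {v. Suc v < length f \<and> P (Suc v) < P v} \<Longrightarrow> P v < P (Suc v)"
  proof -
    fix v assume v: "Suc v < length f" "v \<notin> {v. Suc v < length f \<and> P (Suc v) < P v}"
    then have "P v \<le> P (Suc v)" by auto
    moreover have "P v \<noteq> P (Suc v)" using Pinj[of v "Suc v"] v by auto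
    ultimately show "P v < P (Suc v)" by simp
  qed
  have ch: "\<And>a b. a < b \<Longrightarrow> b < length f \<Longrightarrow> f ! a = f ! b \<Longrightarrow> P a < P b"
  proof -
    fix a b assume ab: "a < b" "b < length f" "f ! a = f ! b"
    have J': "\<And>v. Suc v < length f \<Longrightarrow> v \<notin> {v. Suc v < length f \<and> P (Suc v) < P v} \<Longrightarrow> P v < P (Suc v)"
      using J by blast
    show "P a < P b"
      by (rule chain_lemma[where f = f and P = P and J = "{v. Suc v < length f \<and> P (Suc v) < P v}", OF s st J' ab])
  qed
  show ?L
  proof (intro allI impI)
    fix u v assume uv: "u < length f" "v < length f"
    show "u < v \<longleftrightarrow> (f ! u < f ! v \<or> (f ! u = f ! v \<and> P u < P v))"
    proof (cases "u < v")
      case True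
      then have "f ! u \<le> f ! v" using sorted_nth_mono[OF s, of u v] uv by simp
      then show ?thesis using True ch[OF True uv(2)] by auto
    next
      case False
      then have vu: "v \<le> u" by simp
      then have "f ! v \<le> f ! u" using sorted_nth_mono[OF s, of v u] uv by simp
      moreover have "f ! u = f ! v \<Longrightarrow> \<not> P u < P v"
      proof (cases "u = v")
        case False
        then have "v < u" using vu by simp
        moreover assume "f ! u = f ! v"
        ultimately have "P v < P u" using ch[of v u] uv by simp
        then show ?thesis by simp
      qed simp
      ultimately show ?thesis using False by auto
    qed
  qed
qed


lemma fib_card:
  assumes p: "perms_of n S"
  shows "card (fib S m) = card (SJ n m (iDesSet S))"
proof -
  have l: "length S = n" using perms_of_len[OF p] .
  define \<phi> where "\<phi> F = map (\<lambda>v. F ! pidx S v) [0..<n]" for F :: "int list"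
  define \<psi> where "\<psi> f = map (\<lambda>x. f ! (nat x - 1)) S" for f :: "int list"
  have len\<phi>: "length (\<phi> F) = n" for F unfolding \<phi>_def by simp
  have len\<psi>: "length (\<psi> f) = n" for f unfolding \<psi>_def using l by simp
  have \<psi>\<phi>: "\<psi> (\<phi> F) = F" if "length F = n" for F
  proof (rule nth_equalityI)
    show "length (\<psi> (\<phi> F)) = length F" using len\<psi> that by simp
    fix i assume i: "i < length (\<psi> (\<phi> F))"
    then have i': "i < n" using len\<psi> by simp
    show "\<psi> (\<phi> F) ! i = F ! i"
      using pidx_inv[OF p i'] l i' unfolding \<psi>_def \<phi>_def by simp
  qed
  have \<phi>\<psi>: "\<phi> (\<psi> f) = f" if "length f = n" for f
  proof (rule nth_equalityI)
    show "length (\<phi> (\<psi> f)) = length f" using len\<phi> that by simp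
    fix v assume v: "v < length (\<phi> (\<psi> f))"
    then have v': "v < n" using len\<phi> by simp
    show "\<phi> (\<psi> f) ! v = f ! v"
      using pidx_props[OF p v'] l v' unfolding \<psi>_def \<phi>_def by (simp add: nat_add_distrib)
  qed
  have set\<phi>: "set (\<phi> F) = set F" if "length F = n" for F
  proof
    show "set (\<phi> F) \<subseteq> set F" unfolding \<phi>_def using pidx_props(1)[OF p] that by auto
    show "set F \<subseteq> set (\<phi> F)"
    proof
      fix x assume "x \<in> set F"
      then obtain i where i: "i < length F" "x = F ! i" by (auto simp: in_set_conv_nth)
      then have i: "i < n" "x = F ! i" using that by auto
      then have "x = \<phi> F ! (nat (S ! i) - 1)" "nat (S ! i) - 1 < n"
        using pidx_inv[OF p i(1)] unfolding \<phi>_def by simp_all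
      then show "x \<in> set (\<phi> F)" using len\<phi> by (metis nth_mem)
    qed
  qed
  have Pinj: "\<And>u v. u < length (\<phi> F) \<Longrightarrow> v < length (\<phi> F) \<Longrightarrow> pidx S u = pidx S v \<Longrightarrow> u = v" for F
    using pidx_inj[OF p] len\<phi> by metis
  have key: "posrel F S \<longleftrightarrow> sorted (\<phi> F) \<and> (\<forall>v. Suc v < n \<longrightarrow> v \<in> iDesSet S \<longrightarrow> \<phi> F ! v < \<phi> F ! Suc v)"
    if "length F = n" for F
  proof -
    have "posrel F S \<longleftrightarrow> (\<forall>u v. u < length (\<phi> F) \<longrightarrow> v < length (\<phi> F) \<longrightarrow>
      (u < v \<longleftrightarrow> (\<phi> F ! u < \<phi> F ! v \<or> (\<phi> F ! u = \<phi> F ! v \<and> pidx S u < pidx S v))))"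
      using posrel_iff_vals[OF p that] len\<phi> unfolding \<phi>_def by simp
    also have "\<dots> \<longleftrightarrow> sorted (\<phi> F) \<and> (\<forall>v. Suc v < length (\<phi> F) \<longrightarrow> v \<in> {v. Suc v < length (\<phi> F) \<and> pidx S (Suc v) < pidx S v} \<longrightarrow> \<phi> F ! v < \<phi> F ! Suc v)"
      by (rule vals_iff_sorted[OF Pinj])
    also have "\<dots> \<longleftrightarrow> sorted (\<phi> F) \<and> (\<forall>v. Suc v < n \<longrightarrow> v \<in> iDesSet S \<longrightarrow> \<phi> F ! v < \<phi> F ! Suc v)"
      unfolding iDesSet_def using len\<phi> l by simp
    finally show ?thesis .
  qed
  have "bij_betw \<phi> (fib S m) (SJ n m (iDesSet S))"
  proof (rule bij_betw_byWitness[where f' = \<psi>])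
    show "\<forall>a\<in>fib S m. \<psi> (\<phi> a) = a" using \<psi>\<phi> l unfolding fib_def by auto
    show "\<forall>a'\<in>SJ n m (iDesSet S). \<phi> (\<psi> a') = a'" using \<phi>\<psi> unfolding SJ_def by auto
    show "\<phi> ` fib S m \<subseteq> SJ n m (iDesSet S)"
    proof
      fix y assume "y \<in> \<phi> ` fib S m"
      then obtain F where F: "F \<in> fib S m" "y = \<phi> F" by auto
      then have lF: "length F = n" using l unfolding fib_def by simp
      show "y \<in> SJ n m (iDesSet S)" using F key[OF lF] set\<phi>[OF lF] len\<phi> unfolding fib_def SJ_def by auto
    qed
    show "\<psi> ` SJ n m (iDesSet S) \<subseteq> fib S m"
    proof
      fix y assume "y \<in> \<psi> ` SJ n m (iDesSet S)"
      then obtain f where f: "f \<in> SJ n m (iDesSet S)" "y = \<psi> f" by auto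
      then have lf: "length f = n" unfolding SJ_def by simp
      have ly: "length y = n" using f len\<psi> by simp
      have "\<phi> y = f" using f \<phi>\<psi>[OF lf] by simp
      then show "y \<in> fib S m" using f key[OF ly] set\<phi>[OF ly] ly l unfolding fib_def SJ_def by auto
    qed
  qed
  then show ?thesis by (rule bij_betw_same_card)
qed


definition SL :: "nat \<Rightarrow> int \<Rightarrow> int list set" where
  "SL n r = {g. length g = n \<and> sorted g \<and> set g \<subseteq> {0..r}}"

lemma sorted_range:
  fixes g :: "int list"
  assumes "sorted g" "g \<noteq> []"
  shows "set g \<subseteq> {lo..hi} \<longleftrightarrow> lo \<le> g ! 0 \<and> g ! (length g - 1) \<le> hi"
proof
  assume "set g \<subseteq> {lo..hi}"
  moreover have "g ! 0 \<in> set g" "g ! (length g - 1) \<in> set g" using assms(2) by auto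
  ultimately show "lo \<le> g ! 0 \<and> g ! (length g - 1) \<le> hi" by auto
next
  assume a: "lo \<le> g ! 0 \<and> g ! (length g - 1) \<le> hi"
  show "set g \<subseteq> {lo..hi}"
  proof
    fix x assume "x \<in> set g"
    then obtain i where i: "i < length g" "x = g ! i" by (auto simp: in_set_conv_nth)
    have "g ! 0 \<le> g ! i" "g ! i \<le> g ! (length g - 1)"
      using sorted_nth_mono[OF assms(1)] i by auto
    then show "x \<in> {lo..hi}" using a i by auto
  qed
qed

definition cJ :: "nat set \<Rightarrow> nat \<Rightarrow> nat" where
  "cJ J i = card {v \<in> J. v < i}"

lemma cJ_0[simp]: "cJ J 0 = 0" unfolding cJ_def by simp

lemma cJ_Suc: "cJ J (Suc i) = cJ J i + (if i \<in> J then 1 else 0)"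
proof -
  have "{v \<in> J. v < Suc i} = {v \<in> J. v < i} \<union> (if i \<in> J then {i} else {})" by (auto simp: less_Suc_eq)
  moreover have "finite {v \<in> J. v < i}" by simp
  ultimately show ?thesis unfolding cJ_def by (auto simp: card_insert_if)
qed

lemma cJ_last: "J \<subseteq> {v. Suc v < n} \<Longrightarrow> cJ J (n - 1) = card J"
proof -
  assume "J \<subseteq> {v. Suc v < n}"
  then have "{v \<in> J. v < n - 1} = J" by auto
  then show ?thesis unfolding cJ_def by simp
qed

lemma SJ_SL_card:
  assumes J: "J \<subseteq> {v. Suc v < n}"
  shows "card (SJ n m J) = card (SL n (m - int (card J)))"
proof -
  define \<phi> where "\<phi> f = map (\<lambda>i. f ! i - int (cJ J i)) [0..<n]" for f :: "int list"
  define \<psi> where "\<psi> g = map (\<lambda>i. g ! i + int (cJ J i)) [0..<n]" for g :: "int list"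
  have \<psi>\<phi>: "\<psi> (\<phi> f) = f" if "length f = n" for f
    using that unfolding \<phi>_def \<psi>_def by (simp add: list_eq_iff_nth_eq)
  have \<phi>\<psi>: "\<phi> (\<psi> f) = f" if "length f = n" for f
    using that unfolding \<phi>_def \<psi>_def by (simp add: list_eq_iff_nth_eq)
  have sJ: "cJ J (Suc i) = cJ J i + (if i \<in> J then 1 else 0)" for i by (rule cJ_Suc)
  have "bij_betw \<phi> (SJ n m J) (SL n (m - int (card J)))"
  proof (rule bij_betw_byWitness[where f' = \<psi>])
    show "\<forall>a\<in>SJ n m J. \<psi> (\<phi> a) = a" using \<psi>\<phi> unfolding SJ_def by auto
    show "\<forall>a'\<in>SL n (m - int (card J)). \<phi> (\<psi> a') = a'" using \<phi>\<psi> unfolding SL_def by auto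
    show "\<phi> ` SJ n m J \<subseteq> SL n (m - int (card J))"
    proof
      fix y assume "y \<in> \<phi> ` SJ n m J"
      then obtain f where f: "f \<in> SJ n m J" "y = \<phi> f" by auto
      have lf: "length f = n" and sf: "sorted f" and rf: "set f \<subseteq> {0..m}"
        and stf: "\<forall>v. Suc v < n \<longrightarrow> v \<in> J \<longrightarrow> f ! v < f ! Suc v" using f unfolding SJ_def by auto
      have ly: "length y = n" using f unfolding \<phi>_def by simp
      have sy: "sorted y"
      proof (subst sorted_iff_nth_Suc, intro allI impI)
        fix i assume i: "Suc i < length y"
        have "f ! i \<le> f ! Suc i" using sorted_nth_mono[OF sf, of i "Suc i"] i ly lf by simp
        moreover have "i \<in> J \<Longrightarrow> f ! i < f ! Suc i" using stf i ly by simp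
        ultimately show "y ! i \<le> y ! Suc i" using i ly f(2) sJ[of i] unfolding \<phi>_def by auto
      qed
      show "y \<in> SL n (m - int (card J))"
      proof (cases "n = 0")
        case True then show ?thesis using ly unfolding SL_def by simp
      next
        case False
        then have ne: "y \<noteq> []" "f \<noteq> []" using ly lf by auto
        have r: "0 \<le> f ! 0 \<and> f ! (length f - 1) \<le> m" using sorted_range[OF sf ne(2)] rf by blast
        have "y ! 0 = f ! 0" using False f(2) unfolding \<phi>_def by simp
        moreover have "y ! (length y - 1) = f ! (n - 1) - int (card J)"
          using False f(2) ly cJ_last[OF J] unfolding \<phi>_def by simp
        ultimately have "set y \<subseteq> {0..m - int (card J)}"
          using sorted_range[OF sy ne(1)] r lf by simp
        then show ?thesis using ly sy unfolding SL_def by simp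
      qed
    qed
    show "\<psi> ` SL n (m - int (card J)) \<subseteq> SJ n m J"
    proof
      fix y assume "y \<in> \<psi> ` SL n (m - int (card J))"
      then obtain g where g: "g \<in> SL n (m - int (card J))" "y = \<psi> g" by auto
      have lg: "length g = n" and sg: "sorted g" and rg: "set g \<subseteq> {0..m - int (card J)}"
        using g unfolding SL_def by auto
      have ly: "length y = n" using g unfolding \<psi>_def by simp
      have st: "\<forall>v. Suc v < n \<longrightarrow> v \<in> J \<longrightarrow> y ! v < y ! Suc v"
      proof (intro allI impI)
        fix v assume v: "Suc v < n" "v \<in> J"
        have "g ! v \<le> g ! Suc v" using sorted_nth_mono[OF sg, of v "Suc v"] v lg by simp
        then show "y ! v < y ! Suc v" using v g(2) sJ[of v] unfolding \<psi>_def by simp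
      qed
      have sy: "sorted y"
      proof (subst sorted_iff_nth_Suc, intro allI impI)
        fix i assume i: "Suc i < length y"
        have "g ! i \<le> g ! Suc i" using sorted_nth_mono[OF sg, of i "Suc i"] i ly lg by simp
        then show "y ! i \<le> y ! Suc i" using i ly g(2) sJ[of i] unfolding \<psi>_def by auto
      qed
      have ry: "set y \<subseteq> {0..m}"
      proof (cases "n = 0")
        case True then show ?thesis using ly by simp
      next
        case False
        then have ne: "y \<noteq> []" "g \<noteq> []" using ly lg by auto
        have r: "0 \<le> g ! 0 \<and> g ! (length g - 1) \<le> m - int (card J)" using sorted_range[OF sg ne(2)] rg by blast
        have "y ! 0 = g ! 0" using False g(2) unfolding \<psi>_def by simp
        moreover have "y ! (length y - 1) = g ! (n - 1) + int (card J)"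
          using False g(2) ly cJ_last[OF J] unfolding \<psi>_def by simp
        ultimately show ?thesis using sorted_range[OF sy ne(1)] r lg by simp
      qed
      show "y \<in> SJ n m J" using ly sy ry st unfolding SJ_def by simp
    qed
  qed
  then show ?thesis by (rule bij_betw_same_card)
qed

lemma iDesSet_sub: "perms_of n S \<Longrightarrow> iDesSet S \<subseteq> {v. Suc v < n}"
  unfolding iDesSet_def using perms_of_len by auto

lemma card_fib: "perms_of n S \<Longrightarrow> card (fib S m) = card (SL n (m - int (ides S)))"
  using fib_card SJ_SL_card[OF iDesSet_sub] ides_card by metis

lemma SL_neg: "n \<ge> 1 \<Longrightarrow> r < 0 \<Longrightarrow> SL n r = {}"
proof -
  assume n: "n \<ge> 1" and r: "r < 0"
  { fix g assume "g \<in> SL n r"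
    then have "g \<noteq> []" "set g \<subseteq> {0..r}" using n unfolding SL_def by auto
    then have False using r by (metis all_not_in_conv atLeastAtMost_iff empty_subsetI le_less_trans linorder_not_le set_empty subset_eq) }
  then show ?thesis by auto
qed

lemma SL_zero: "SL n 0 = {replicate n 0}"
proof
  show "SL n 0 \<subseteq> {replicate n 0}"
  proof
    fix g assume "g \<in> SL n 0"
    then have "length g = n" "set g \<subseteq> {0}" unfolding SL_def by auto
    then have "g = replicate n 0" by (metis replicate_eqI singleton_iff subsetD)
    then show "g \<in> {replicate n 0}" by simp
  qed
  show "{replicate n 0} \<subseteq> SL n 0" unfolding SL_def by (auto simp: sorted_iff_nth_Suc)
qed

definition WIset :: "nat \<Rightarrow> int \<Rightarrow> nat set \<Rightarrow> int list set" where
  "WIset n m D = {F. length F = n \<and> set F \<subseteq> {0..m} \<and> andreI F \<and> Des F = D}"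

definition WIIset :: "nat \<Rightarrow> int \<Rightarrow> nat set \<Rightarrow> int list set" where
  "WIIset n m D = {F. length F = n \<and> set F \<subseteq> {0..m} \<and> andreIIw F \<and> Des F = D}"

lemma range_from_Min_good:
  "F \<noteq> [] \<Longrightarrow> 0 \<le> Min (set F) \<Longrightarrow> good m F \<Longrightarrow> set F \<subseteq> {0..m}"
  unfolding good_def by (auto intro: order_trans[OF _ Min_le])

lemma card_WI_WII: "card (WIIset n m D) = card (WIset n m D)"
proof -
  have "bij_betw (Phi m) (WIIset n m D) (WIset n m D)"
  proof (rule bij_betw_byWitness[where f' = "Psi m"])
    show "\<forall>a\<in>WIIset n m D. Psi m (Phi m a) = a"
    proof
      fix a assume "a \<in> WIIset n m D"
      then have "andreIIw a" "good m a" unfolding WIIset_def good_def by auto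
      then show "Psi m (Phi m a) = a" by (rule Psi_Phi)
    qed
    show "\<forall>a'\<in>WIset n m D. Phi m (Psi m a') = a'"
    proof
      fix a assume "a \<in> WIset n m D"
      then have "andreI a" "good m a" unfolding WIset_def good_def by auto
      then show "Phi m (Psi m a) = a" by (rule Phi_Psi)
    qed
    show "Phi m ` WIIset n m D \<subseteq> WIset n m D"
    proof
      fix y assume "y \<in> Phi m ` WIIset n m D"
      then obtain F where F: "F \<in> WIIset n m D" "y = Phi m F" by auto
      show "y \<in> WIset n m D"
      proof (cases "F = []")
        case True then show ?thesis using F by (simp add: Phi_short WIIset_def WIset_def andreI_short)
      next
        case False
        have g: "good m F" and a: "andreIIw F" using F unfolding WIIset_def good_def by auto
        note P = Phi_props[OF a False g]
        have "0 \<le> Min (set F)" using F False unfolding WIIset_def by auto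
        then have "set (Phi m F) \<subseteq> {0..m}"
          using P False by (intro range_from_Min_good) (auto simp: Phi_short)
        moreover have "Phi m F \<noteq> []" using P False by auto
        ultimately show ?thesis using F P unfolding WIIset_def WIset_def by auto
      qed
    qed
    show "Psi m ` WIset n m D \<subseteq> WIIset n m D"
    proof
      fix y assume "y \<in> Psi m ` WIset n m D"
      then obtain F where F: "F \<in> WIset n m D" "y = Psi m F" by auto
      show "y \<in> WIIset n m D"
      proof (cases "F = []")
        case True then show ?thesis using F by (simp add: Psi_short WIIset_def WIset_def andreIIw_short)
      next
        case False
        have g: "good m F" and a: "andreI F" using F unfolding WIset_def good_def by auto
        note P = Psi_props[OF a False g]
        have "0 \<le> Min (set F)" using F False unfolding WIset_def by auto
        have ne: "Psi m F \<noteq> []" using P False by auto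
        have r: "set (Psi m F) \<subseteq> {0..m}"
          using P ne \<open>0 \<le> Min (set F)\<close> by (intro range_from_Min_good) auto
        have "Des (Phi m (Psi m F)) = Des (Psi m F)" using Phi_props[of "Psi m F" m] P ne by simp
        then have "Des (Psi m F) = Des F" using Phi_Psi[OF a g] by simp
        then show ?thesis using F P r unfolding WIIset_def WIset_def by auto
      qed
    qed
  qed
  then show ?thesis by (metis bij_betw_same_card)
qed

lemma finite_fib: "finite (fib S m)"
proof -
  have "fib S m \<subseteq> {xs. set xs \<subseteq> {0..m} \<and> length xs = length S}" unfolding fib_def by auto
  moreover have "finite {xs. set xs \<subseteq> {0..m} \<and> length xs = length S}"
    by (rule finite_lists_length_eq) simp
  ultimately show ?thesis by (rule finite_subset)
qed

lemma finite_perms: "finite {S. perms_of n S}"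
proof -
  have "{S. perms_of n S} \<subseteq> {xs. set xs \<subseteq> {1..int n} \<and> length xs = n}"
    using perms_of_len unfolding perms_of_def by auto
  moreover have "finite {xs. set xs \<subseteq> {1..int n} \<and> length xs = n}"
    by (rule finite_lists_length_eq) simp
  ultimately show ?thesis by (rule finite_subset)
qed

lemma fib_disjoint: "perms_of n S \<Longrightarrow> perms_of n S' \<Longrightarrow> S \<noteq> S' \<Longrightarrow> fib S m \<inter> fib S' m = {}"
  unfolding fib_def using posrel_unique by blast

lemma card_WI_sum:
  "card (WIset n m D) = (\<Sum>S\<in>{S. perms_of n S \<and> andreI S \<and> Des S = D}. card (fib S m))"
proof -
  let ?A = "{S. perms_of n S \<and> andreI S \<and> Des S = D}"
  have eq: "WIset n m D = (\<Union>S\<in>?A. fib S m)"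
  proof
    show "WIset n m D \<subseteq> (\<Union>S\<in>?A. fib S m)"
    proof
      fix F assume F: "F \<in> WIset n m D"
      have p: "posrel F (stdz F)" by (rule stdz_posrel)
      have "perms_of n (stdz F)" using stdz_perm[of F] F unfolding WIset_def by simp
      moreover have "andreI (stdz F)" "Des (stdz F) = D"
        using posrel_andre[OF p] posrel_Des[OF p] F unfolding WIset_def by auto
      moreover have "F \<in> fib (stdz F) m" using F p posrel_len[OF p] unfolding WIset_def fib_def by auto
      ultimately show "F \<in> (\<Union>S\<in>?A. fib S m)" by blast
    qed
    show "(\<Union>S\<in>?A. fib S m) \<subseteq> WIset n m D"
    proof
      fix F assume "F \<in> (\<Union>S\<in>?A. fib S m)"
      then obtain S where S: "S \<in> ?A" "F \<in> fib S m" by blast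
      then have p: "posrel F S" and l: "length F = length S" and r: "set F \<subseteq> {0..m}" unfolding fib_def by auto
      have "length S = n" using S perms_of_len by blast
      then show "F \<in> WIset n m D" using posrel_andre[OF p] posrel_Des[OF p] S l r unfolding WIset_def by auto
    qed
  qed
  have fA: "finite ?A" using finite_perms by (rule finite_subset[rotated]) auto
  have "card (\<Union>S\<in>?A. fib S m) = (\<Sum>S\<in>?A. card (fib S m))"
    by (rule card_UN_disjoint[OF fA]) (auto simp: finite_fib dest: fib_disjoint)
  then show ?thesis using eq by simp
qed

lemma card_WII_sum:
  "card (WIIset n m D) = (\<Sum>S\<in>{S. perms_of n S \<and> andreII S \<and> Des S = D}. card (fib S m))"
proof -
  let ?A = "{S. perms_of n S \<and> andreII S \<and> Des S = D}"
  have eq: "WIIset n m D = (\<Union>S\<in>?A. fib S m)"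
  proof
    show "WIIset n m D \<subseteq> (\<Union>S\<in>?A. fib S m)"
    proof
      fix F assume F: "F \<in> WIIset n m D"
      have p: "posrel F (stdz F)" by (rule stdz_posrel)
      have "perms_of n (stdz F)" using stdz_perm[of F] F unfolding WIIset_def by simp
      moreover have "andreII (stdz F)" "Des (stdz F) = D"
        using posrel_andre[OF p] posrel_Des[OF p] F unfolding WIIset_def by auto
      moreover have "F \<in> fib (stdz F) m" using F p posrel_len[OF p] unfolding WIIset_def fib_def by auto
      ultimately show "F \<in> (\<Union>S\<in>?A. fib S m)" by blast
    qed
    show "(\<Union>S\<in>?A. fib S m) \<subseteq> WIIset n m D"
    proof
      fix F assume "F \<in> (\<Union>S\<in>?A. fib S m)"
      then obtain S where S: "S \<in> ?A" "F \<in> fib S m" by blast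
      then have p: "posrel F S" and l: "length F = length S" and r: "set F \<subseteq> {0..m}" unfolding fib_def by auto
      have "length S = n" using S perms_of_len by blast
      then show "F \<in> WIIset n m D" using posrel_andre[OF p] posrel_Des[OF p] S l r unfolding WIIset_def by auto
    qed
  qed
  have fA: "finite ?A" using finite_perms by (rule finite_subset[rotated]) auto
  have "card (\<Union>S\<in>?A. fib S m) = (\<Sum>S\<in>?A. card (fib S m))"
    by (rule card_UN_disjoint[OF fA]) (auto simp: finite_fib dest: fib_disjoint)
  then show ?thesis using eq by simp
qed


lemma sum_by_value:
  fixes g :: "nat \<Rightarrow> nat"
  assumes "finite A" "h ` A \<subseteq> K" "finite K"
  shows "(\<Sum>x\<in>A. g (h x)) = (\<Sum>j\<in>K. card {x\<in>A. h x = j} * g j)"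
proof -
  have "(\<Sum>x\<in>A. g (h x)) = (\<Sum>j\<in>K. \<Sum>x\<in>{x\<in>A. h x = j}. g (h x))"
    using sum.group[OF assms(1) assms(3) assms(2), of "\<lambda>x. g (h x)"] by simp
  also have "\<dots> = (\<Sum>j\<in>K. card {x\<in>A. h x = j} * g j)"
    by (rule sum.cong) auto
  finally show ?thesis .
qed

lemma triangular_inversion:
  fixes a b :: "nat \<Rightarrow> nat" and c :: "nat \<Rightarrow> nat \<Rightarrow> nat"
  assumes eq: "\<And>k. (\<Sum>j\<le>N. a j * c k j) = (\<Sum>j\<le>N. b j * c k j)"
    and z: "\<And>k j. k < j \<Longrightarrow> c k j = 0" and o: "\<And>k. c k k = 1"
  shows "k \<le> N \<Longrightarrow> a k = b k"
proof (induction k rule: less_induct)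
  case (less k)
  have split: "\<And>f :: nat \<Rightarrow> nat. (\<Sum>j\<le>N. f j * c k j) = (\<Sum>j<k. f j * c k j) + f k"
  proof -
    fix f :: "nat \<Rightarrow> nat"
    have "{..N} = {..<k} \<union> {k} \<union> {k<..N}" using less.prems by auto
    then have "(\<Sum>j\<le>N. f j * c k j) = (\<Sum>j\<in>{..<k} \<union> {k} \<union> {k<..N}. f j * c k j)" by simp
    also have "\<dots> = (\<Sum>j<k. f j * c k j) + f k * c k k + (\<Sum>j\<in>{k<..N}. f j * c k j)"
      by (subst sum.union_disjoint; auto simp: sum.union_disjoint)
    also have "(\<Sum>j\<in>{k<..N}. f j * c k j) = 0" using z by simp
    finally show "(\<Sum>j\<le>N. f j * c k j) = (\<Sum>j<k. f j * c k j) + f k" using o by simp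
  qed
  have "(\<Sum>j<k. a j * c k j) = (\<Sum>j<k. b j * c k j)"
    using less.IH less.prems by (intro sum.cong) auto
  then show ?case using eq[of k] split[of a] split[of b] by simp
qed

lemma ides_le: "perms_of n S \<Longrightarrow> ides S \<le> n"
proof -
  assume p: "perms_of n S"
  have "iDesSet S \<subseteq> {..<n}" using iDesSet_sub[OF p] by auto
  then have "card (iDesSet S) \<le> n" by (metis card_lessThan card_mono finite_lessThan)
  then show ?thesis using ides_card[OF p] by simp
qed

lemma SL_tri: "n \<ge> 1 \<Longrightarrow> k < j \<Longrightarrow> card (SL n (int k - int j)) = 0"
  using SL_neg by simp

lemma SL_diag: "card (SL n (int k - int k)) = 1"
proof -
  have e: "int k - int k = 0" by simp
  show ?thesis by (simp only: e SL_zero) simp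
qed

theorem andre_I_II_fiber:
  assumes n: "n \<ge> 1"
  shows "card {S. perms_of n S \<and> andreI S \<and> Des S = D \<and> ides S = k}
       = card {S. perms_of n S \<and> andreII S \<and> Des S = D \<and> ides S = k}"
proof -
  let ?A = "{S. perms_of n S \<and> andreI S \<and> Des S = D}"
  let ?B = "{S. perms_of n S \<and> andreII S \<and> Des S = D}"
  have fA: "finite ?A" using finite_perms by (rule finite_subset[rotated]) auto
  have fB: "finite ?B" using finite_perms by (rule finite_subset[rotated]) auto
  have iA: "ides ` ?A \<subseteq> {..n}" using ides_le by auto
  have iB: "ides ` ?B \<subseteq> {..n}" using ides_le by auto
  define c where "c k j = card (SL n (int k - int j))" for k j
  have S: "(\<Sum>j\<le>n. card {x\<in>?A. ides x = j} * c m j) = (\<Sum>j\<le>n. card {x\<in>?B. ides x = j} * c m j)" for m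
  proof -
    have "(\<Sum>j\<le>n. card {x\<in>?A. ides x = j} * c m j) = (\<Sum>S\<in>?A. c m (ides S))"
      using sum_by_value[OF fA iA, of "c m"] by simp
    also have "\<dots> = (\<Sum>S\<in>?A. card (fib S (int m)))"
      unfolding c_def by (intro sum.cong) (auto simp: card_fib)
    also have "\<dots> = card (WIset n (int m) D)" using card_WI_sum by simp
    also have "\<dots> = card (WIIset n (int m) D)" using card_WI_WII by simp
    also have "\<dots> = (\<Sum>S\<in>?B. card (fib S (int m)))" using card_WII_sum by simp
    also have "\<dots> = (\<Sum>S\<in>?B. c m (ides S))"
      unfolding c_def by (intro sum.cong) (auto simp: card_fib)
    also have "\<dots> = (\<Sum>j\<le>n. card {x\<in>?B. ides x = j} * c m j)"
      using sum_by_value[OF fB iB, of "c m"] by simp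
    finally show ?thesis .
  qed
  have eqk: "card {x\<in>?A. ides x = k} = card {x\<in>?B. ides x = k}"
  proof (cases "k \<le> n")
    case True
    show ?thesis
      by (rule triangular_inversion[where c = c and N = n, OF S _ _ True])
         (auto simp: c_def SL_tri[OF n] SL_zero)
  next
    case False
    then have e1: "{x\<in>?A. ides x = k} = {}" and e2: "{x\<in>?B. ides x = k} = {}" using ides_le by fastforce+
    show ?thesis by (simp only: e1 e2)
  qed
  have "{x\<in>?A. ides x = k} = {S. perms_of n S \<and> andreI S \<and> Des S = D \<and> ides S = k}" by auto
  moreover have "{x\<in>?B. ides x = k} = {S. perms_of n S \<and> andreII S \<and> Des S = D \<and> ides S = k}" by auto
  ultimately show ?thesis using eqk by simp
qed

definition ins :: "nat \<Rightarrow> int list \<Rightarrow> int \<Rightarrow> int list" where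
  "ins p w x = take p w @ x # drop p w"

lemma ins_len[simp]: "p \<le> length w \<Longrightarrow> length (ins p w x) = Suc (length w)"
  unfolding ins_def by simp

lemma ins_set[simp]: "set (ins p w x) = insert x (set w)"
  unfolding ins_def by (metis Un_insert_right append_take_drop_id list.simps(15) set_append)

lemma ins_nth: "p \<le> length w \<Longrightarrow> ins p w x ! i = (if i < p then w ! i else if i = p then x else w ! (i - 1))"
  unfolding ins_def by (auto simp: nth_append min_def nth_Cons' not_less)

lemma ins_ne[simp]: "ins p w x \<noteq> []" unfolding ins_def by simp

lemma Des_alt: "(j \<in> Des w) = (0 < j \<and> j < length w \<and> w ! (j - 1) > w ! j)"
  unfolding Des_def by auto

definition insDes :: "nat set \<Rightarrow> nat \<Rightarrow> nat \<Rightarrow> nat set" where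
  "insDes D p L = {i \<in> D. i < p} \<union> (if p < L then {Suc p} else {}) \<union> {Suc i | i. i \<in> D \<and> p < i}"

lemma Des_sub: "Des w \<subseteq> {1..<length w}" unfolding Des_def by auto

lemma Des_ins:
  assumes p: "p \<le> length w" and x: "\<forall>y\<in>set w. y < x"
  shows "Des (ins p w x) = insDes (Des w) p (length w)"
proof (intro set_eqI)
  fix j
  have wi: "\<And>i. i < length w \<Longrightarrow> w ! i < x" using x by auto
  show "(j \<in> Des (ins p w x)) = (j \<in> insDes (Des w) p (length w))"
  proof (cases "j = 0")
    case True then show ?thesis unfolding insDes_def Des_def by auto
  next
    case False
    then obtain i where j: "j = Suc i" by (cases j) auto
    consider "Suc i < p" | "Suc i = p" | "i = p" | "p < i" by linarith
    then show ?thesis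
    proof cases
      case 1
      then show ?thesis unfolding j insDes_def Des_alt using p by (auto simp: ins_nth)
    next
      case 2
      have "w ! i < x" using wi 2 p by simp
      then have "\<not> (ins p w x ! i > ins p w x ! Suc i)" using 2 p by (simp add: ins_nth)
      then have L: "Suc i \<notin> Des (ins p w x)" unfolding Des_alt by simp
      have R: "Suc i \<notin> insDes (Des w) p (length w)" unfolding insDes_def using 2 by auto
      show ?thesis using L R unfolding j by simp
    next
      case 3
      then show ?thesis unfolding j insDes_def Des_alt using p wi by (auto simp: ins_nth)
    next
      case 4
      then show ?thesis unfolding j insDes_def Des_alt using p
        by (auto simp: ins_nth)
    qed
  qed
qed


lemma dd_ins:
  assumes p: "p \<le> length u" and x: "\<forall>y\<in>set u. y < x" and nd: "\<not> has_double_descent u"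
  shows "has_double_descent (ins p u x) \<longleftrightarrow> (Suc p < length u \<and> u ! p > u ! Suc p)"
proof
  assume "Suc p < length u \<and> u ! p > u ! Suc p"
  then have a: "Suc p < length u" "u ! p > u ! Suc p" by auto
  have "u ! p < x" using x a(1) by simp
  then have "p + 2 < length (ins p u x) \<and> ins p u x ! p > ins p u x ! (p + 1) \<and> ins p u x ! (p + 1) > ins p u x ! (p + 2)"
    using a p by (simp add: ins_nth)
  then show "has_double_descent (ins p u x)" unfolding has_double_descent_def by blast
next
  assume "has_double_descent (ins p u x)"
  then obtain i where i: "i + 2 < length (ins p u x)" "ins p u x ! i > ins p u x ! (i + 1)"
    "ins p u x ! (i + 1) > ins p u x ! (i + 2)" unfolding has_double_descent_def by blast
  have li: "i + 2 < Suc (length u)" using i(1) p by simp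
  have ux: "\<And>k. k < length u \<Longrightarrow> u ! k < x" using x by simp
  consider "i + 2 < p" | "i + 2 = p" | "i + 1 = p" | "i = p" | "p < i" by linarith
  then show "Suc p < length u \<and> u ! p > u ! Suc p"
  proof cases
    case 1
    then have "i + 2 < length u \<and> u ! i > u ! (i + 1) \<and> u ! (i + 1) > u ! (i + 2)"
      using i p by (simp add: ins_nth)
    then show ?thesis using nd unfolding has_double_descent_def by blast
  next
    case 2
    then have "ins p u x ! (i + 1) = u ! (i + 1)" "ins p u x ! (i + 2) = x" using p by (simp_all add: ins_nth)
    moreover have "u ! (i + 1) < x" using ux 2 p by simp
    ultimately show ?thesis using i(3) by simp
  next
    case 3
    then have "ins p u x ! i = u ! i" "ins p u x ! (i + 1) = x" using p by (simp_all add: ins_nth)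
    moreover have "u ! i < x" using ux 3 p by simp
    ultimately show ?thesis using i(2) by simp
  next
    case 4
    then have "ins p u x ! (i + 1) = u ! p" "ins p u x ! (i + 2) = u ! Suc p" using p by (simp_all add: ins_nth)
    then show ?thesis using i(3) li 4 by simp
  next
    case 5
    then obtain k where k: "i = Suc k" by (cases i) auto
    have "ins p u x ! i = u ! k" "ins p u x ! (i + 1) = u ! (k + 1)" "ins p u x ! (i + 2) = u ! (k + 2)"
      using p 5 k by (simp_all add: ins_nth)
    then have "k + 2 < length u \<and> u ! k > u ! (k + 1) \<and> u ! (k + 1) > u ! (k + 2)"
      using i li k by simp
    then show ?thesis using nd unfolding has_double_descent_def by blast
  qed
qed

lemma Min_insert_big: "finite A \<Longrightarrow> A \<noteq> {} \<Longrightarrow> Min A < (x::int) \<Longrightarrow> Min (insert x A) = Min A"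
proof -
  assume a: "finite A" "A \<noteq> {}" "Min A < x"
  then have "Min (insert x A) = min x (Min A)" by simp
  then show ?thesis using a(3) by simp
qed

lemma andreII_ins:
  "distinct w \<Longrightarrow> \<forall>y\<in>set w. y < x \<Longrightarrow> w \<noteq> [] \<Longrightarrow> p \<le> length w \<Longrightarrow>
   andreII (ins p w x) \<longleftrightarrow> andreII w \<and> (p = length w \<or> (Suc p < length w \<and> w ! p < w ! Suc p))"
proof (induction "length w" arbitrary: w p rule: less_induct)
  case less
  note d = less.prems(1) and xw = less.prems(2) and ne = less.prems(3) and p = less.prems(4)
  define a where "a = Min (set w)"
  define l where "l = left_part w"
  define r where "r = right_part w"
  have wd: "w = l @ a # r" using lr_decomp[OF ne] unfolding a_def l_def r_def by simp
  have lg: "\<forall>y\<in>set l. a < y" unfolding l_def a_def using left_gt by blast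
  have rg: "\<forall>y\<in>set r. a \<le> y" unfolding r_def a_def using right_ge by blast
  have rg': "\<forall>y\<in>set r. a < y" using rg d wd by fastforce
  have xa: "a < x" using xw wd by simp
  have dl: "distinct l" "distinct r" using d wd by auto
  have xl: "\<forall>y\<in>set l. y < x" "\<forall>y\<in>set r. y < x" using xw wd by auto
  have lenw: "length w = Suc (length l + length r)" using wd by simp
  have AW: "andreII w = (if l = [] \<and> r = [] then True else andreII l \<and> andreII r \<and> Min (set (l @ r)) \<in> set r)"
    using andreII_split[OF lg rg] wd by simp
  show ?case
  proof (cases "p \<le> length l")
    case True
    have insd: "ins p w x = ins p l x @ a # r" using True wd unfolding ins_def by simp
    have lg2: "\<forall>y\<in>set (ins p l x). a < y" using lg xa by simp
    have A: "andreII (ins p w x) = (andreII (ins p l x) \<and> andreII r \<and> Min (set (ins p l x @ r)) \<in> set r)"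
      using andreII_split[OF lg2 rg] insd by simp
    show ?thesis
    proof (cases "l = []")
      case True
      then have p0: "p = 0" using \<open>p \<le> length l\<close> by simp
      have ilx: "ins p l x = [x]" using True p0 unfolding ins_def by simp
      have m: "Min (set ([x] @ r)) \<in> set r \<longleftrightarrow> r \<noteq> []"
      proof
        assume "r \<noteq> []"
        then have e1: "Min (set ([x] @ r)) = min x (Min (set r))" by simp
        have "Min (set r) < x" using xl(2) \<open>r \<noteq> []\<close> by (simp add: Min_less_iff)
        then have "Min (set ([x] @ r)) = Min (set r)" using e1 by simp
        then show "Min (set ([x] @ r)) \<in> set r" using \<open>r \<noteq> []\<close> by simp
      qed auto
      have "andreII [x]" by (simp add: andreII_short)
      then have L: "andreII (ins p w x) = (andreII r \<and> r \<noteq> [])" using A ilx m by simp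
      have "r \<noteq> [] \<Longrightarrow> Min (set r) \<in> set r" by simp
      moreover have "andreII []" by (simp add: andreII_short)
      ultimately have R1: "andreII w = (r = [] \<or> andreII r)" using AW True by auto
      have R2: "(p = length w \<or> (Suc p < length w \<and> w ! p < w ! Suc p)) = (r \<noteq> [])"
      proof -
        have "p \<noteq> length w" using p0 lenw by simp
        moreover have "r \<noteq> [] \<Longrightarrow> w ! 0 < w ! 1"
          using wd True rg' by (cases r) auto
        ultimately show ?thesis using p0 lenw True by auto
      qed
      show ?thesis using L R1 R2 by auto
    next
      case False
      have IH: "andreII (ins p l x) = (andreII l \<and> (p = length l \<or> (Suc p < length l \<and> l ! p < l ! Suc p)))"
        using less.hyps[of l p] dl xl False \<open>p \<le> length l\<close> lenw by simp
      have mm: "Min (set (ins p l x @ r)) = Min (set (l @ r))"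
      proof -
        have "set (ins p l x @ r) = insert x (set (l @ r))" by auto
        moreover have "Min (set (l @ r)) < x"
        proof -
          have "Min (set (l @ r)) \<le> hd l" using False by (intro Min_le) auto
          moreover have "hd l < x" using xl(1) False by simp
          ultimately show ?thesis by simp
        qed
        ultimately show ?thesis using False by (simp add: Min_insert_big)
      qed
      have allow: "Min (set (l @ r)) \<in> set r \<Longrightarrow>
          (p = length l \<or> (Suc p < length l \<and> l ! p < l ! Suc p)) = (p = length w \<or> (Suc p < length w \<and> w ! p < w ! Suc p))"
      proof -
        assume "Min (set (l @ r)) \<in> set r"
        then have rne: "r \<noteq> []" by auto
        consider "p = length l" | "Suc p = length l" | "Suc p < length l" using \<open>p \<le> length l\<close> by linarith
        then show ?thesis
        proof cases
          case 1
          have "w ! p = a" "w ! Suc p = r ! 0" using wd 1 by (simp_all add: nth_append)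
          moreover have "a < r ! 0" using rg' rne by simp
          ultimately show ?thesis using 1 lenw rne by simp
        next
          case 2
          have "w ! p = l ! p" "w ! Suc p = a" using wd 2 by (simp_all add: nth_append)
          moreover have "a < l ! p" using lg 2 by simp
          ultimately show ?thesis using 2 lenw by auto
        next
          case 3
          have "w ! p = l ! p" "w ! Suc p = l ! Suc p" using wd 3 by (simp_all add: nth_append)
          then show ?thesis using 3 lenw by auto
        qed
      qed
      have AW': "andreII w = (andreII l \<and> andreII r \<and> Min (set (l @ r)) \<in> set r)" using AW False by simp
      show ?thesis using A IH mm allow AW' by auto
    qed
  next
    case False
    define q where "q = p - Suc (length l)"
    have pq: "p = Suc (length l) + q" using False unfolding q_def by simp
    have q: "q \<le> length r" using p pq lenw by simp
    have insd: "ins p w x = l @ a # ins q r x" using wd pq q unfolding ins_def by simp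
    have rg2: "\<forall>y\<in>set (ins q r x). a \<le> y" using rg xa by auto
    have A: "andreII (ins p w x) = (andreII l \<and> andreII (ins q r x) \<and> Min (set (l @ ins q r x)) \<in> set (ins q r x))"
      using andreII_split[OF lg rg2] insd by simp
    show ?thesis
    proof (cases "r = []")
      case True
      then have q0: "q = 0" using q by simp
      have irx: "ins q r x = [x]" using True q0 unfolding ins_def by simp
      have m: "Min (set (l @ [x])) \<in> set [x] \<longleftrightarrow> l = []"
      proof
        assume "Min (set (l @ [x])) \<in> set [x]"
        then have "Min (set (l @ [x])) = x" by simp
        moreover have "l \<noteq> [] \<Longrightarrow> Min (set (l @ [x])) < x" using xl(1) by (simp add: Min_less_iff)
        ultimately show "l = []" by force
      qed simp
      have "andreII [x]" by (simp add: andreII_short)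
      then have L: "andreII (ins p w x) = (l = [])" using A irx m by (auto simp: andreII_short)
      have R: "andreII w = (l = [])" using AW True by auto
      have "p = length w" using pq q0 lenw True by simp
      then show ?thesis using L R by simp
    next
      case False
      have IH: "andreII (ins q r x) = (andreII r \<and> (q = length r \<or> (Suc q < length r \<and> r ! q < r ! Suc q)))"
        using less.hyps[of r q] dl xl False q lenw by simp
      have mm: "Min (set (l @ ins q r x)) = Min (set (l @ r))"
      proof -
        have "set (l @ ins q r x) = insert x (set (l @ r))" by auto
        moreover have "Min (set (l @ r)) < x"
        proof -
          have "Min (set (l @ r)) \<le> hd r" using False by (intro Min_le) auto
          moreover have "hd r < x" using xl(2) False by simp
          ultimately show ?thesis by simp
        qed
        ultimately show ?thesis using False by (simp add: Min_insert_big)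
      qed
      have "Min (set (l @ r)) \<in> set (l @ r)" using Min_in[of "set (l @ r)"] False by simp
      then have mx: "Min (set (l @ r)) \<noteq> x" using xl by auto
      have mem: "(Min (set (l @ r)) \<in> set (ins q r x)) = (Min (set (l @ r)) \<in> set r)" using mx by simp
      have allow: "(q = length r \<or> (Suc q < length r \<and> r ! q < r ! Suc q)) = (p = length w \<or> (Suc p < length w \<and> w ! p < w ! Suc p))"
      proof -
        have "w ! p = r ! q" "Suc q < length r \<Longrightarrow> w ! Suc p = r ! Suc q" using wd pq by (simp_all add: nth_append)
        then show ?thesis using pq lenw by auto
      qed
      have AW': "andreII w = (andreII l \<and> andreII r \<and> Min (set (l @ r)) \<in> set r)" using AW False by simp
      show ?thesis using A IH mm mem allow AW' by auto
    qed
  qed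
qed

lemma perms_ins:
  assumes p: "perms_of N w" and pN: "p \<le> N"
  shows "perms_of (Suc N) (ins p w (int (Suc N)))"
proof -
  have l: "length w = N" using perms_of_len[OF p] .
  have nin: "int (Suc N) \<notin> set w" using p unfolding perms_of_def by auto
  have "distinct (ins p w (int (Suc N)))"
  proof -
    have "distinct (int (Suc N) # w)" using p nin unfolding perms_of_def by simp
    moreover have "set (ins p w (int (Suc N))) = set (int (Suc N) # w)" by simp
    moreover have "length (ins p w (int (Suc N))) = length (int (Suc N) # w)" unfolding ins_def by simp
    ultimately show ?thesis by (metis card_distinct distinct_card)
  qed
  moreover have "set (ins p w (int (Suc N))) = insert (int (Suc N)) {1..int N}"
    using p unfolding perms_of_def by simp
  moreover have "insert (int (Suc N)) {1..int N} = {1..int (Suc N)}" by auto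
  ultimately show ?thesis unfolding perms_of_def by simp
qed

lemma pidx_eq:
  assumes p: "perms_of n S" and i: "i < n" and Si: "S ! i = int (Suc v)"
  shows "pidx S v = i"
proof -
  have v: "v < n" using pidx_inv(1)[OF p i] Si by simp
  have "S ! pidx S v = S ! i" "pidx S v < n" using pidx_props[OF p v] Si by auto
  moreover have "distinct S" "length S = n" using p perms_of_len unfolding perms_of_def by auto
  ultimately show ?thesis using i nth_eq_iff_index_eq by blast
qed

lemma ins_decomp:
  assumes p: "perms_of N w" and pN: "p \<le> N"
  shows "pidx (ins p w (int (Suc N))) N = p" "removeAll (int (Suc N)) (ins p w (int (Suc N))) = w"
proof -
  have l: "length w = N" using perms_of_len[OF p] .
  show "pidx (ins p w (int (Suc N))) N = p"
    using pidx_eq[OF perms_ins[OF p pN], of p N] pN l by (simp add: ins_nth)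
  have nin: "int (Suc N) \<notin> set w" using p unfolding perms_of_def by auto
  then have "int (Suc N) \<notin> set (take p w)" "int (Suc N) \<notin> set (drop p w)"
    using set_take_subset set_drop_subset by fastforce+
  then show "removeAll (int (Suc N)) (ins p w (int (Suc N))) = w"
    unfolding ins_def by simp
qed

lemma perms_decomp:
  assumes s: "perms_of (Suc N) S"
  shows "pidx S N \<le> N" "perms_of N (removeAll (int (Suc N)) S)"
    "S = ins (pidx S N) (removeAll (int (Suc N)) S) (int (Suc N))"
proof -
  define p where "p = pidx S N"
  have l: "length S = Suc N" using perms_of_len[OF s] .
  have pp: "p < Suc N" "S ! p = int (Suc N)" using pidx_props[OF s, of N] unfolding p_def by auto
  then show "pidx S N \<le> N" unfolding p_def by simp
  have d: "distinct S" using s unfolding perms_of_def by simp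
  have Sd: "S = take p S @ int (Suc N) # drop (Suc p) S"
    using pp l by (metis id_take_nth_drop)
  have d2: "distinct (take p S @ int (Suc N) # drop (Suc p) S)" using d by (simp only: Sd[symmetric])
  have nin: "int (Suc N) \<notin> set (take p S)" "int (Suc N) \<notin> set (drop (Suc p) S)"
    using d2 by auto
  have rm: "removeAll (int (Suc N)) S = take p S @ drop (Suc p) S"
    using nin by (subst Sd) simp
  have lt: "length (take p S) = p" using pp l by simp
  have e1: "take p (take p S @ drop (Suc p) S) = take p S" using lt by simp
  have e2: "drop p (take p S @ drop (Suc p) S) = drop (Suc p) S" using lt by simp
  show "S = ins (pidx S N) (removeAll (int (Suc N)) S) (int (Suc N))"
    unfolding p_def[symmetric] rm ins_def e1 e2 by (rule Sd)
  have "distinct (removeAll (int (Suc N)) S)" using d by (rule distinct_removeAll)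
  moreover have "set (removeAll (int (Suc N)) S) = {1..int (Suc N)} - {int (Suc N)}"
    using s unfolding perms_of_def by simp
  moreover have "{1..int (Suc N)} - {int (Suc N)} = {1..int N}" by auto
  ultimately show "perms_of N (removeAll (int (Suc N)) S)" unfolding perms_of_def by simp
qed

definition mpos :: "int list \<Rightarrow> nat" where
  "mpos S = pidx S (length S - 1)"

definition mp :: "int list \<Rightarrow> nat option" where
  "mp S = (if mpos S = length S - 1 then None else Some (mpos S))"

lemma mpos_ins: "perms_of N w \<Longrightarrow> p \<le> N \<Longrightarrow> mpos (ins p w (int (Suc N))) = p"
  unfolding mpos_def using ins_decomp(1) perms_of_len by simp

lemma mpos_lt: "perms_of N w \<Longrightarrow> N \<ge> 1 \<Longrightarrow> mpos w < N"
  unfolding mpos_def using pidx_props(1) perms_of_len by simp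

lemma pidx_ins:
  assumes p: "perms_of N w" and pN: "p \<le> N" and u: "u < N"
  shows "pidx (ins p w (int (Suc N))) u = (if pidx w u < p then pidx w u else Suc (pidx w u))"
proof -
  have l: "length w = N" using perms_of_len[OF p] .
  note pu = pidx_props[OF p u]
  show ?thesis
    using pidx_eq[OF perms_ins[OF p pN], of "if pidx w u < p then pidx w u else Suc (pidx w u)" u] pu pN l
    by (auto simp: ins_nth)
qed

lemma ides_ins:
  assumes p: "perms_of N w" and N1: "N \<ge> 1" and pN: "p \<le> N"
  shows "ides (ins p w (int (Suc N))) = ides w + (if p \<le> mpos w then 1 else 0)"
proof -
  have l: "length w = N" using perms_of_len[OF p] .
  note pi = perms_ins[OF p pN]
  have mw: "mpos w = pidx w (N - 1)" unfolding mpos_def l ..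
  define sh where "sh i = (if i < p then i else Suc i)" for i
  have sh_mono: "\<And>i j. (sh i < sh j) = (i < j)" unfolding sh_def by auto
  have px: "\<And>u. u < N \<Longrightarrow> pidx (ins p w (int (Suc N))) u = sh (pidx w u)"
    using pidx_ins[OF p pN] unfolding sh_def by simp
  have pN': "pidx (ins p w (int (Suc N))) N = p" using ins_decomp(1)[OF p pN] .
  have "iDesSet (ins p w (int (Suc N))) = iDesSet w \<union> (if p \<le> mpos w then {N - 1} else {})"
  proof (intro set_eqI iffI)
    fix v assume "v \<in> iDesSet (ins p w (int (Suc N)))"
    then have v: "Suc v < Suc N" "pidx (ins p w (int (Suc N))) (Suc v) < pidx (ins p w (int (Suc N))) v"
      unfolding iDesSet_def using pN l by auto
    show "v \<in> iDesSet w \<union> (if p \<le> mpos w then {N - 1} else {})"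
    proof (cases "Suc v < N")
      case True
      then show ?thesis using v px[of v] px[of "Suc v"] sh_mono unfolding iDesSet_def l by simp
    next
      case False
      then have vN: "Suc v = N" using v by simp
      then have "p < sh (pidx w v)" using v pN' px[of v] by simp
      then have "p \<le> mpos w" unfolding mw sh_def using vN by (auto split: if_splits)
      moreover have "v = N - 1" using vN by simp
      ultimately show ?thesis by simp
    qed
  next
    fix v assume "v \<in> iDesSet w \<union> (if p \<le> mpos w then {N - 1} else {})"
    then consider "v \<in> iDesSet w" | "p \<le> mpos w" "v = N - 1" by (auto split: if_splits)
    then show "v \<in> iDesSet (ins p w (int (Suc N)))"
    proof cases
      case 1
      then have "Suc v < N" "pidx w (Suc v) < pidx w v" unfolding iDesSet_def l by auto
      then show ?thesis using px[of v] px[of "Suc v"] sh_mono pN l unfolding iDesSet_def by simp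
    next
      case 2
      then have "Suc v = N" using N1 by simp
      moreover have "p < sh (pidx w v)" using 2 unfolding mw sh_def by auto
      ultimately show ?thesis using px[of v] pN' pN l unfolding iDesSet_def by simp
    qed
  qed
  moreover have "N - 1 \<notin> iDesSet w" unfolding iDesSet_def l using N1 by simp
  moreover have "finite (iDesSet w)"
  proof -
    have "iDesSet w \<subseteq> {..<N}" using iDesSet_sub[OF p] by auto
    then show ?thesis by (rule finite_subset) simp
  qed
  ultimately show ?thesis using ides_card[OF p] ides_card[OF pi] by auto
qed

definition simsun :: "nat \<Rightarrow> int list \<Rightarrow> bool" where
  "simsun N u \<longleftrightarrow> (\<forall>k\<in>{1..int N}. \<not> has_double_descent (filter (\<lambda>x. x \<le> k) u))"

lemma dd_short: "length u < 3 \<Longrightarrow> \<not> has_double_descent u"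
  unfolding has_double_descent_def by auto

lemma filter_all: "perms_of N u \<Longrightarrow> int N \<le> k \<Longrightarrow> filter (\<lambda>x. x \<le> k) u = u"
  unfolding perms_of_def by (auto simp: filter_id_conv)

lemma simsun_nodd: "perms_of N u \<Longrightarrow> simsun N u \<Longrightarrow> \<not> has_double_descent u"
proof -
  assume p: "perms_of N u" and s: "simsun N u"
  show ?thesis
  proof (cases "N = 0")
    case True then show ?thesis using perms_of_len[OF p] dd_short by simp
  next
    case False
    then have "\<not> has_double_descent (filter (\<lambda>x. x \<le> int N) u)" using s unfolding simsun_def by simp
    then show ?thesis using filter_all[OF p] by simp
  qed
qed

lemma filter_ins_small: "k < x \<Longrightarrow> filter (\<lambda>y. y \<le> k) (ins p u x) = filter (\<lambda>y. y \<le> k) u"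
  unfolding ins_def by (metis (no_types, lifting) append_take_drop_id filter.simps(2) filter_append not_le)

lemma Des_nmem: "Suc p < length u \<Longrightarrow> distinct u \<Longrightarrow> (Suc p \<notin> Des u) = (u ! p < u ! Suc p)"
proof -
  assume a: "Suc p < length u" "distinct u"
  have "u ! p \<noteq> u ! Suc p" using a nth_eq_iff_index_eq by fastforce
  then show ?thesis using Des_mem[OF a(1)] by auto
qed

lemma sim_ins:
  assumes p: "perms_of N u" and pN: "p \<le> N"
  shows "simsun (Suc N) (ins p u (int (Suc N))) \<longleftrightarrow> simsun N u \<and> Suc p \<notin> Des u"
proof -
  have l: "length u = N" using perms_of_len[OF p] .
  have pi: "perms_of (Suc N) (ins p u (int (Suc N)))" by (rule perms_ins[OF p pN])
  have "{1..int (Suc N)} = {1..int N} \<union> {int (Suc N)}" by auto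
  then have "simsun (Suc N) (ins p u (int (Suc N))) \<longleftrightarrow>
      (\<forall>k\<in>{1..int N}. \<not> has_double_descent (filter (\<lambda>x. x \<le> k) (ins p u (int (Suc N)))))
      \<and> \<not> has_double_descent (filter (\<lambda>x. x \<le> int (Suc N)) (ins p u (int (Suc N))))"
    unfolding simsun_def by auto
  also have "\<dots> \<longleftrightarrow> simsun N u \<and> \<not> has_double_descent (ins p u (int (Suc N)))"
    using filter_ins_small[of _ "int (Suc N)" p u] filter_all[OF pi] unfolding simsun_def by auto
  also have "\<dots> \<longleftrightarrow> simsun N u \<and> Suc p \<notin> Des u"
  proof (cases "simsun N u")
    case True
    have nd: "\<not> has_double_descent u" by (rule simsun_nodd[OF p True])
    have x: "\<forall>y\<in>set u. y < int (Suc N)" using p unfolding perms_of_def by auto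
    have "has_double_descent (ins p u (int (Suc N))) \<longleftrightarrow> (Suc p < length u \<and> u ! p > u ! Suc p)"
      using dd_ins[OF _ x nd] pN l by simp
    also have "\<dots> \<longleftrightarrow> Suc p \<in> Des u"
      using Des_mem[of p u] Des_sub[of u] by (cases "Suc p < length u") auto
    finally show ?thesis using True by simp
  qed simp
  finally show ?thesis .
qed

lemma AII_ins:
  assumes p: "perms_of N w" and N1: "N \<ge> 1" and pN: "p \<le> N"
  shows "andreII (ins p w (int (Suc N))) \<longleftrightarrow> andreII w \<and> (p = N \<or> (Suc p < N \<and> Suc p \<notin> Des w))"
proof -
  have l: "length w = N" using perms_of_len[OF p] .
  have d: "distinct w" using p unfolding perms_of_def by simp
  have x: "\<forall>y\<in>set w. y < int (Suc N)" using p unfolding perms_of_def by auto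
  have ne: "w \<noteq> []" using l N1 by auto
  show ?thesis using andreII_ins[OF d x ne] pN l Des_nmem[of p w] d by auto
qed

lemma insDes_end: "D \<subseteq> {1..<L} \<Longrightarrow> insDes D L L = D"
  unfolding insDes_def by auto

lemma Des_perm_sub: "perms_of N w \<Longrightarrow> Des w \<subseteq> {1..<N}"
  using Des_sub perms_of_len by metis


definition AII :: "nat \<Rightarrow> int list set" where "AII N = {S. perms_of N S \<and> andreII S}"
definition SIM :: "nat \<Rightarrow> int list set" where "SIM N = {S. perms_of N S \<and> simsun N S}"

lemma aii_dec:
  assumes s: "\<sigma> \<in> AII (Suc N)" and N1: "N \<ge> 1"
  shows "removeAll (int (Suc N)) \<sigma> \<in> AII N" "pidx \<sigma> N \<le> N"
    "pidx \<sigma> N = N \<or> (Suc (pidx \<sigma> N) < N \<and> Suc (pidx \<sigma> N) \<notin> Des (removeAll (int (Suc N)) \<sigma>))"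
    "\<sigma> = ins (pidx \<sigma> N) (removeAll (int (Suc N)) \<sigma>) (int (Suc N))"
proof -
  have p: "perms_of (Suc N) \<sigma>" "andreII \<sigma>" using s unfolding AII_def by auto
  note d = perms_decomp[OF p(1)]
  have A: "andreII (removeAll (int (Suc N)) \<sigma>) \<and> (pidx \<sigma> N = N \<or> (Suc (pidx \<sigma> N) < N \<and> Suc (pidx \<sigma> N) \<notin> Des (removeAll (int (Suc N)) \<sigma>)))"
    using AII_ins[OF d(2) N1 d(1)] d(3) p(2) by simp
  then show "removeAll (int (Suc N)) \<sigma> \<in> AII N" using d(2) unfolding AII_def by simp
  show "pidx \<sigma> N \<le> N" by (rule d(1))
  show "pidx \<sigma> N = N \<or> (Suc (pidx \<sigma> N) < N \<and> Suc (pidx \<sigma> N) \<notin> Des (removeAll (int (Suc N)) \<sigma>))" using A by simp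
  show "\<sigma> = ins (pidx \<sigma> N) (removeAll (int (Suc N)) \<sigma>) (int (Suc N))" by (rule d(3))
qed

lemma aii_step:
  assumes w: "w \<in> AII N" and N1: "N \<ge> 1" and pN: "p \<le> N" and al: "p = N \<or> (Suc p < N \<and> Suc p \<notin> Des w)"
  shows "ins p w (int (Suc N)) \<in> AII (Suc N)"
  using perms_ins[OF _ pN] AII_ins[OF _ N1 pN] w al unfolding AII_def by auto

lemma sim_dec:
  assumes v: "v \<in> SIM (Suc N)"
  shows "removeAll (int (Suc N)) v \<in> SIM N" "pidx v N \<le> N"
    "Suc (pidx v N) \<notin> Des (removeAll (int (Suc N)) v)"
    "v = ins (pidx v N) (removeAll (int (Suc N)) v) (int (Suc N))"
proof -
  have p: "perms_of (Suc N) v" "simsun (Suc N) v" using v unfolding SIM_def by auto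
  note d = perms_decomp[OF p(1)]
  have A: "simsun N (removeAll (int (Suc N)) v) \<and> Suc (pidx v N) \<notin> Des (removeAll (int (Suc N)) v)"
    using sim_ins[OF d(2) d(1)] d(3) p(2) by simp
  then show "removeAll (int (Suc N)) v \<in> SIM N" using d(2) unfolding SIM_def by simp
  show "pidx v N \<le> N" by (rule d(1))
  show "Suc (pidx v N) \<notin> Des (removeAll (int (Suc N)) v)" using A by simp
  show "v = ins (pidx v N) (removeAll (int (Suc N)) v) (int (Suc N))" by (rule d(3))
qed

lemma sim_step:
  assumes u: "u \<in> SIM N" and qN: "q \<le> N" and al: "Suc q \<notin> Des u"
  shows "ins q u (int (Suc N)) \<in> SIM (Suc N)"
  using perms_ins[OF _ qN] sim_ins[OF _ qN] u al unfolding SIM_def by auto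

lemma ins_stats:
  assumes p: "perms_of N w" and N1: "N \<ge> 1" and pN: "p \<le> N"
  shows "Des (ins p w (int (Suc N))) = insDes (Des w) p N"
    "ides (ins p w (int (Suc N))) = ides w + (if p \<le> mpos w then 1 else 0)"
    "mp (ins p w (int (Suc N))) = (if p = N then None else Some p)"
proof -
  have l: "length w = N" using perms_of_len[OF p] .
  have x: "\<forall>y\<in>set w. y < int (Suc N)" using p unfolding perms_of_def by auto
  show "Des (ins p w (int (Suc N))) = insDes (Des w) p N" using Des_ins[OF _ x] pN l by simp
  show "ides (ins p w (int (Suc N))) = ides w + (if p \<le> mpos w then 1 else 0)" by (rule ides_ins[OF p N1 pN])
  show "mp (ins p w (int (Suc N))) = (if p = N then None else Some p)"
    unfolding mp_def using mpos_ins[OF p pN] pN l by simp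
qed

lemma perms_one: "perms_of 1 S \<longleftrightarrow> S = [1]"
proof
  assume p: "perms_of 1 S"
  then have "length S = 1" "set S = {1}" using perms_of_len unfolding perms_of_def by auto
  then show "S = [1]" by (cases S) auto
qed (simp add: perms_of_def)

lemma AII_2: "AII (Suc (Suc 0)) = {ins 1 [1] 2}"
proof
  show "AII (Suc (Suc 0)) \<subseteq> {ins 1 [1] 2}"
  proof
    fix \<sigma> assume s: "\<sigma> \<in> AII (Suc (Suc 0))"
    note d = aii_dec[OF s, simplified]
    have w: "removeAll 2 \<sigma> = [1]" using d(1) perms_one unfolding AII_def by auto
    have "pidx \<sigma> 1 = 1" using d(2,3) by auto
    then show "\<sigma> \<in> {ins 1 [1] 2}" using d(4) w by simp
  qed
  show "{ins 1 [1] 2} \<subseteq> AII (Suc (Suc 0))"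
  proof -
    have "[1] \<in> AII 1" unfolding AII_def using perms_one by (simp add: andreII_short)
    then have "ins 1 [1] (int (Suc 1)) \<in> AII (Suc 1)" by (rule aii_step) auto
    then show ?thesis by (simp add: numeral_2_eq_2)
  qed
qed

lemma SIM_1: "SIM (Suc 0) = {[1]}"
proof -
  have "simsun 1 [1]" unfolding simsun_def using dd_short by simp
  then show ?thesis unfolding SIM_def using perms_one by auto
qed

lemma mp_one: "mp [1] = None"
proof -
  have "pidx [1] 0 = 0" using pidx_eq[of 1 "[1]" 0 0] perms_one by simp
  then show ?thesis unfolding mp_def mpos_def by simp
qed

theorem AII_SIM:
  assumes "N \<ge> 1"
  shows "\<exists>f. bij_betw f (AII (Suc N)) (SIM N) \<and> (\<forall>w\<in>AII (Suc N). Des (f w) = Des w \<and> ides (f w) = ides w \<and> mp (f w) = mp w)"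
  using assms
proof (induction N rule: nat_induct_at_least)
  case base
  have p1: "perms_of 1 [1]" using perms_one by simp
  have st: "Des (ins 1 [1] 2) = Des [1]" "ides (ins 1 [1] 2) = ides [1]" "mp (ins 1 [1] 2) = mp [1]"
  proof -
    have "Des [1] \<subseteq> {1..<1}" using Des_perm_sub[OF p1] .
    then show "Des (ins 1 [1] 2) = Des [1]" using ins_stats(1)[OF p1, of 1] insDes_end by simp
    have "mpos [1] = 0" using mpos_lt[OF p1] by simp
    then show "ides (ins 1 [1] 2) = ides [1]" using ins_stats(2)[OF p1, of 1] by simp
    show "mp (ins 1 [1] 2) = mp [1]" using ins_stats(3)[OF p1, of 1] mp_one by simp
  qed
  show ?case
    using st by (intro exI[of _ "\<lambda>_. [1]"]) (simp add: AII_2 SIM_1 bij_betw_def)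
next
  case (Suc n0)
  note n1 = Suc.hyps(1)
  obtain f where fb: "bij_betw f (AII (Suc n0)) (SIM n0)"
    and fs: "\<And>w. w \<in> AII (Suc n0) \<Longrightarrow> Des (f w) = Des w \<and> ides (f w) = ides w \<and> mp (f w) = mp w"
    using Suc.IH by blast
  define M where "M = int (Suc (Suc n0))"
  define qm where "qm p = (if p = Suc n0 then n0 else p)" for p
  define g where "g \<sigma> = ins (qm (pidx \<sigma> (Suc n0))) (f (removeAll M \<sigma>)) (int (Suc n0))" for \<sigma>
  have n1': "Suc n0 \<ge> 1" by simp
  have facts: "\<And>\<sigma>. \<sigma> \<in> AII (Suc (Suc n0)) \<Longrightarrow>
      removeAll M \<sigma> \<in> AII (Suc n0) \<and> f (removeAll M \<sigma>) \<in> SIM n0 \<and>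
      qm (pidx \<sigma> (Suc n0)) \<le> n0 \<and> Suc (qm (pidx \<sigma> (Suc n0))) \<notin> Des (f (removeAll M \<sigma>)) \<and>
      g \<sigma> \<in> SIM (Suc n0) \<and> Des (g \<sigma>) = Des \<sigma> \<and> ides (g \<sigma>) = ides \<sigma> \<and> mp (g \<sigma>) = mp \<sigma>"
  proof -
    fix \<sigma> assume s: "\<sigma> \<in> AII (Suc (Suc n0))"
    note d = aii_dec[OF s n1', folded M_def]
    define w where "w = removeAll M \<sigma>"
    define p where "p = pidx \<sigma> (Suc n0)"
    define u where "u = f w"
    have wA: "w \<in> AII (Suc n0)" using d(1) unfolding w_def .
    have uS: "u \<in> SIM n0" using fb wA unfolding u_def bij_betw_def by auto
    have pw: "perms_of (Suc n0) w" using wA unfolding AII_def by simp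
    have pu: "perms_of n0 u" using uS unfolding SIM_def by simp
    have st: "Des u = Des w" "ides u = ides w" "mp u = mp w" using fs[OF wA] unfolding u_def by auto
    have pN: "p \<le> Suc n0" using d(2) unfolding p_def .
    have al: "p = Suc n0 \<or> (Suc p < Suc n0 \<and> Suc p \<notin> Des w)" using d(3) unfolding p_def w_def .
    have sd: "\<sigma> = ins p w M" using d(4) unfolding p_def w_def M_def .
    have qN: "qm p \<le> n0" using pN al unfolding qm_def by auto
    have Du: "Des u \<subseteq> {1..<n0}" using Des_perm_sub[OF pu] .
    have Dw: "Des w \<subseteq> {1..<Suc n0}" using Des_perm_sub[OF pw] .
    have alq: "Suc (qm p) \<notin> Des u" using al st(1) Du unfolding qm_def by auto
    have gs: "g \<sigma> = ins (qm p) u (int (Suc n0))" unfolding g_def p_def u_def w_def ..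
    have gS: "g \<sigma> \<in> SIM (Suc n0)" using sim_step[OF uS qN alq] gs by simp
    note sw = ins_stats[OF pw n1' pN, folded M_def, folded sd]
    note su = ins_stats[OF pu n1 qN, folded gs]
    have mw: "mpos w < Suc n0" using mpos_lt[OF pw] by simp
    have mu: "mpos u < n0" using mpos_lt[OF pu n1] .
    have D: "Des (g \<sigma>) = Des \<sigma>"
    proof (cases "p = Suc n0")
      case True
      then show ?thesis using sw(1) su(1) insDes_end[OF Du] insDes_end[OF Dw] st(1) unfolding qm_def by simp
    next
      case False
      then have "p < n0" using al by simp
      then show ?thesis using sw(1) su(1) st(1) unfolding qm_def insDes_def by simp
    qed
    have I: "ides (g \<sigma>) = ides \<sigma>"
    proof (cases "p = Suc n0")
      case True
      then show ?thesis using sw(2) su(2) st(2) mw mu unfolding qm_def by simp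
    next
      case False
      then have pl: "p < n0" using al by simp
      have "(p \<le> mpos u) = (p \<le> mpos w)"
      proof (cases "mpos w = Suc n0 - 1")
        case True
        then have "mpos u = n0 - 1" using st(3) perms_of_len[OF pu] perms_of_len[OF pw]
          unfolding mp_def by (auto split: if_splits)
        then show ?thesis using True pl by simp
      next
        case False
        then have "mpos u = mpos w" using st(3) perms_of_len[OF pu] perms_of_len[OF pw]
          unfolding mp_def by (auto split: if_splits)
        then show ?thesis by simp
      qed
      then show ?thesis using sw(2) su(2) st(2) False unfolding qm_def by simp
    qed
    have P: "mp (g \<sigma>) = mp \<sigma>"
      using sw(3) su(3) al unfolding qm_def by auto
    show "removeAll M \<sigma> \<in> AII (Suc n0) \<and> f (removeAll M \<sigma>) \<in> SIM n0 \<and>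
      qm (pidx \<sigma> (Suc n0)) \<le> n0 \<and> Suc (qm (pidx \<sigma> (Suc n0))) \<notin> Des (f (removeAll M \<sigma>)) \<and>
      g \<sigma> \<in> SIM (Suc n0) \<and> Des (g \<sigma>) = Des \<sigma> \<and> ides (g \<sigma>) = ides \<sigma> \<and> mp (g \<sigma>) = mp \<sigma>"
      using wA uS qN alq gS D I P unfolding w_def u_def p_def by simp
  qed
  have inj: "inj_on g (AII (Suc (Suc n0)))"
  proof (rule inj_onI)
    fix \<sigma>1 \<sigma>2 assume s1: "\<sigma>1 \<in> AII (Suc (Suc n0))" and s2: "\<sigma>2 \<in> AII (Suc (Suc n0))" and e: "g \<sigma>1 = g \<sigma>2"
    note d1 = aii_dec[OF s1 n1', folded M_def] and d2 = aii_dec[OF s2 n1', folded M_def]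
    note F1 = facts[OF s1] and F2 = facts[OF s2]
    have pu1: "perms_of n0 (f (removeAll M \<sigma>1))" using F1 unfolding SIM_def by simp
    have pu2: "perms_of n0 (f (removeAll M \<sigma>2))" using F2 unfolding SIM_def by simp
    have "qm (pidx \<sigma>1 (Suc n0)) = qm (pidx \<sigma>2 (Suc n0))"
      using ins_decomp(1)[OF pu1, of "qm (pidx \<sigma>1 (Suc n0))"] ins_decomp(1)[OF pu2, of "qm (pidx \<sigma>2 (Suc n0))"] F1 F2 e
      unfolding g_def by simp
    then have pe: "pidx \<sigma>1 (Suc n0) = pidx \<sigma>2 (Suc n0)" using d1(3) d2(3) unfolding qm_def by (auto split: if_splits)
    have "f (removeAll M \<sigma>1) = f (removeAll M \<sigma>2)"
      using ins_decomp(2)[OF pu1, of "qm (pidx \<sigma>1 (Suc n0))"] ins_decomp(2)[OF pu2, of "qm (pidx \<sigma>2 (Suc n0))"] F1 F2 e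
      unfolding g_def by simp
    then have we: "removeAll M \<sigma>1 = removeAll M \<sigma>2"
      using fb F1 F2 unfolding bij_betw_def inj_on_def by blast
    show "\<sigma>1 = \<sigma>2" using d1(4) d2(4) pe we by metis
  qed
  have img: "g ` AII (Suc (Suc n0)) = SIM (Suc n0)"
  proof
    show "g ` AII (Suc (Suc n0)) \<subseteq> SIM (Suc n0)" using facts by auto
    show "SIM (Suc n0) \<subseteq> g ` AII (Suc (Suc n0))"
    proof
      fix v assume v: "v \<in> SIM (Suc n0)"
      note d = sim_dec[OF v]
      define u where "u = removeAll (int (Suc n0)) v"
      define q where "q = pidx v n0"
      have uS: "u \<in> SIM n0" using d(1) unfolding u_def .
      obtain w where wA: "w \<in> AII (Suc n0)" and fw: "f w = u"
        using fb uS unfolding bij_betw_def by (metis imageE)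
      have pw: "perms_of (Suc n0) w" using wA unfolding AII_def by simp
      have pu: "perms_of n0 u" using uS unfolding SIM_def by simp
      have Dwu: "Des w = Des u" using fs[OF wA] fw by simp
      define p where "p = (if q = n0 then Suc n0 else q)"
      have qn: "q \<le> n0" using d(2) unfolding q_def .
      have pN: "p \<le> Suc n0" using qn unfolding p_def by simp
      have al: "p = Suc n0 \<or> (Suc p < Suc n0 \<and> Suc p \<notin> Des w)"
        using d(3) qn Dwu unfolding p_def q_def u_def by auto
      define \<sigma> where "\<sigma> = ins p w M"
      have sA: "\<sigma> \<in> AII (Suc (Suc n0))" using aii_step[OF wA n1' pN al] unfolding \<sigma>_def M_def .
      have "pidx \<sigma> (Suc n0) = p" "removeAll M \<sigma> = w"
        using ins_decomp[OF pw pN] unfolding \<sigma>_def M_def by auto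
      then have "g \<sigma> = ins q u (int (Suc n0))" unfolding g_def qm_def p_def using fw qn by auto
      also have "\<dots> = v" using d(4) unfolding u_def q_def by simp
      finally show "v \<in> g ` AII (Suc (Suc n0))" using sA by (metis imageI)
    qed
  qed
  show ?case
  proof (rule exI[of _ g], intro conjI)
    show "bij_betw g (AII (Suc (Suc n0))) (SIM (Suc n0))" using inj img unfolding bij_betw_def by simp
    show "\<forall>w\<in>AII (Suc (Suc n0)). Des (g w) = Des w \<and> ides (g w) = ides w \<and> mp (g w) = mp w"
      using facts by blast
  qed
qed

lemma ins_end: "length u = N \<Longrightarrow> ins N u x = u @ [x]"
  unfolding ins_def by simp

lemma RS_eq: "n \<ge> 1 \<Longrightarrow> RS n = {w. perms_of n w \<and> last w = int n \<and> simsun n w}"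
proof -
  assume n: "n \<ge> 1"
  have "perms_of n w \<Longrightarrow> w \<noteq> []" for w
    using perms_of_len[of n w] n by auto
  then show ?thesis unfolding RS_def perms_eq simsun_def by auto
qed

lemma SIM_RS:
  assumes N1: "N \<ge> 1"
  shows "bij_betw (\<lambda>u. ins N u (int (Suc N))) (SIM N) (RS (Suc N))"
    "\<And>u. u \<in> SIM N \<Longrightarrow> Des (ins N u (int (Suc N))) = Des u \<and> ides (ins N u (int (Suc N))) = ides u"
proof -
  have sub: "\<And>u. u \<in> SIM N \<Longrightarrow> ins N u (int (Suc N)) \<in> RS (Suc N)"
  proof -
    fix u assume u: "u \<in> SIM N"
    have pu: "perms_of N u" using u unfolding SIM_def by simp
    have "Suc N \<notin> Des u" using Des_perm_sub[OF pu] by auto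
    then have "ins N u (int (Suc N)) \<in> SIM (Suc N)" using sim_step[OF u _] by simp
    moreover have "last (ins N u (int (Suc N))) = int (Suc N)" using ins_end[OF perms_of_len[OF pu]] by simp
    ultimately show "ins N u (int (Suc N)) \<in> RS (Suc N)" unfolding RS_eq[OF le_SucI[OF N1]] SIM_def by simp
  qed
  have inj: "inj_on (\<lambda>u. ins N u (int (Suc N))) (SIM N)"
  proof (rule inj_onI)
    fix u1 u2 assume "u1 \<in> SIM N" "u2 \<in> SIM N" "ins N u1 (int (Suc N)) = ins N u2 (int (Suc N))"
    then show "u1 = u2" using ins_decomp(2)[of N u1 N] ins_decomp(2)[of N u2 N] unfolding SIM_def by auto
  qed
  have sur: "RS (Suc N) \<subseteq> (\<lambda>u. ins N u (int (Suc N))) ` SIM N"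
  proof
    fix v assume v: "v \<in> RS (Suc N)"
    then have vS: "v \<in> SIM (Suc N)" and lv: "last v = int (Suc N)" and pv: "perms_of (Suc N) v"
      unfolding RS_eq[OF le_SucI[OF N1]] SIM_def by auto
    note d = sim_dec[OF vS]
    have lenv: "length v = Suc N" using perms_of_len[OF pv] .
    have "v ! N = int (Suc N)" using lv lenv by (metis diff_Suc_1 last_conv_nth list.size(3) nat.simps(3))
    then have "pidx v N = N" using pidx_eq[OF pv, of N N] by simp
    then have "v = ins N (removeAll (int (Suc N)) v) (int (Suc N))" using d(4) by simp
    then show "v \<in> (\<lambda>u. ins N u (int (Suc N))) ` SIM N" using d(1) by (metis imageI)
  qed
  show "bij_betw (\<lambda>u. ins N u (int (Suc N))) (SIM N) (RS (Suc N))"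
    unfolding bij_betw_def using inj sub sur by blast
  fix u assume u: "u \<in> SIM N"
  have pu: "perms_of N u" using u unfolding SIM_def by simp
  note st = ins_stats[OF pu N1 order_refl]
  have "mpos u < N" using mpos_lt[OF pu N1] .
  then show "Des (ins N u (int (Suc N))) = Des u \<and> ides (ins N u (int (Suc N))) = ides u"
    using st insDes_end[OF Des_perm_sub[OF pu]] by simp
qed

lemma AndII_RS:
  assumes n: "n \<ge> 1"
  shows "\<exists>h. bij_betw h (AndII n) (RS n) \<and> (\<forall>w\<in>AndII n. Des (h w) = Des w \<and> ides (h w) = ides w)"
proof (cases "n = 1")
  case True
  have a1: "andreII [1]" by (simp add: andreII_short)
  have "AndII 1 = {[1]}"
  proof (rule set_eqI)
    fix w show "w \<in> AndII 1 \<longleftrightarrow> w \<in> {[1]}"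
      unfolding AndII_def perms_eq mem_Collect_eq perms_one using a1 by blast
  qed
  moreover have "RS 1 = {[1]}"
  proof -
    have s1: "simsun 1 [1]" unfolding simsun_def using dd_short by simp
    show ?thesis
    proof (rule set_eqI)
      fix w show "w \<in> RS 1 \<longleftrightarrow> w \<in> {[1]}"
        unfolding RS_eq[OF order_refl] mem_Collect_eq perms_one using s1 by auto
    qed
  qed
  ultimately show ?thesis using True by (intro exI[of _ id]) auto
next
  case False
  then obtain N where N: "n = Suc N" "N \<ge> 1" using n by (cases n) auto
  obtain f where fb: "bij_betw f (AII (Suc N)) (SIM N)"
    and fs: "\<And>w. w \<in> AII (Suc N) \<Longrightarrow> Des (f w) = Des w \<and> ides (f w) = ides w \<and> mp (f w) = mp w"
    using AII_SIM[OF N(2)] by blast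
  have A: "AndII n = AII (Suc N)" unfolding AndII_def AII_def perms_eq N(1) by simp
  define h where "h w = ins N (f w) (int (Suc N))" for w
  have "bij_betw h (AII (Suc N)) (RS (Suc N))"
    unfolding h_def using bij_betw_trans[OF fb SIM_RS(1)[OF N(2)]] by (simp add: comp_def)
  then have "bij_betw h (AndII n) (RS n)" using A N(1) by simp
  moreover have "\<forall>w\<in>AndII n. Des (h w) = Des w \<and> ides (h w) = ides w"
  proof
    fix w assume "w \<in> AndII n"
    then have w: "w \<in> AII (Suc N)" using A by simp
    then have "f w \<in> SIM N" using fb unfolding bij_betw_def by auto
    then show "Des (h w) = Des w \<and> ides (h w) = ides w" using SIM_RS(2)[OF N(2)] fs[OF w] unfolding h_def by simp
  qed
  ultimately show ?thesis by blast
qed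

lemma sum_eq_by_fibers:
  fixes W :: "'b \<Rightarrow> 'a::comm_semiring_1"
  assumes fA: "finite A" and fB: "finite B" and c: "\<And>y. card {x\<in>A. h x = y} = card {x\<in>B. h x = y}"
  shows "(\<Sum>x\<in>A. W (h x)) = (\<Sum>x\<in>B. W (h x))"
proof -
  define T where "T = h ` A \<union> h ` B"
  have fT: "finite T" unfolding T_def using fA fB by simp
  have gen: "\<And>C. finite C \<Longrightarrow> h ` C \<subseteq> T \<Longrightarrow> (\<Sum>x\<in>C. W (h x)) = (\<Sum>y\<in>T. of_nat (card {x\<in>C. h x = y}) * W y)"
  proof -
    fix C assume fC: "finite C" and hC: "h ` C \<subseteq> T"
    have "(\<Sum>x\<in>C. W (h x)) = (\<Sum>y\<in>T. \<Sum>x\<in>{x\<in>C. h x = y}. W (h x))"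
      using sum.group[OF fC fT hC, of "\<lambda>x. W (h x)"] by simp
    also have "\<dots> = (\<Sum>y\<in>T. of_nat (card {x\<in>C. h x = y}) * W y)"
      by (rule sum.cong) simp_all
    finally show "(\<Sum>x\<in>C. W (h x)) = (\<Sum>y\<in>T. of_nat (card {x\<in>C. h x = y}) * W y)" .
  qed
  show ?thesis using gen[OF fA] gen[OF fB] c unfolding T_def by simp
qed

lemma finite_AndI: "finite (AndI n)" unfolding AndI_def perms_eq using finite_perms by simp
lemma finite_AndII: "finite (AndII n)" unfolding AndII_def perms_eq using finite_perms by simp

theorem theorem1p1:
  fixes n :: nat and s t q :: "'a :: comm_semiring_1"
  assumes "n \<ge> 1"
  shows "(\<Sum>\<sigma>\<in>AndI n. s ^ ides \<sigma> * t ^ des \<sigma> * q ^ maj \<sigma>)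
           = (\<Sum>\<sigma>\<in>AndII n. s ^ ides \<sigma> * t ^ des \<sigma> * q ^ maj \<sigma>)
       \<and> (\<Sum>\<sigma>\<in>AndII n. s ^ ides \<sigma> * t ^ des \<sigma> * q ^ maj \<sigma>)
           = (\<Sum>\<sigma>\<in>RS n. s ^ ides \<sigma> * t ^ des \<sigma> * q ^ maj \<sigma>)"
proof
  define W where "W y = s ^ snd y * t ^ card (fst y) * q ^ (\<Sum>i\<in>fst y. i)" for y :: "nat set \<times> nat"
  define h where "h \<sigma> = (Des \<sigma>, ides \<sigma>)" for \<sigma>
  have G: "s ^ ides \<sigma> * t ^ des \<sigma> * q ^ maj \<sigma> = W (h \<sigma>)" for \<sigma>
    unfolding W_def h_def des_def maj_def by simp
  have c: "card {x\<in>AndI n. h x = y} = card {x\<in>AndII n. h x = y}" for y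
  proof -
    obtain D k where y: "y = (D, k)" by (cases y)
    have "{x\<in>AndI n. h x = y} = {S. perms_of n S \<and> andreI S \<and> Des S = D \<and> ides S = k}"
      unfolding y h_def AndI_def perms_eq by auto
    moreover have "{x\<in>AndII n. h x = y} = {S. perms_of n S \<and> andreII S \<and> Des S = D \<and> ides S = k}"
      unfolding y h_def AndII_def perms_eq by auto
    ultimately show ?thesis using andre_I_II_fiber[OF assms] by simp
  qed
  show "(\<Sum>\<sigma>\<in>AndI n. s ^ ides \<sigma> * t ^ des \<sigma> * q ^ maj \<sigma>)
           = (\<Sum>\<sigma>\<in>AndII n. s ^ ides \<sigma> * t ^ des \<sigma> * q ^ maj \<sigma>)"
    unfolding G using sum_eq_by_fibers[OF finite_AndI finite_AndII c] .
  obtain g where gb: "bij_betw g (AndII n) (RS n)" and gs: "\<forall>w\<in>AndII n. Des (g w) = Des w \<and> ides (g w) = ides w"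
    using AndII_RS[OF assms] by blast
  have "(\<Sum>\<sigma>\<in>AndII n. W (h \<sigma>)) = (\<Sum>\<sigma>\<in>AndII n. W (h (g \<sigma>)))"
    using gs unfolding h_def by (intro sum.cong) auto
  also have "\<dots> = (\<Sum>\<sigma>\<in>RS n. W (h \<sigma>))"
    by (rule sum.reindex_bij_betw[OF gb])
  finally show "(\<Sum>\<sigma>\<in>AndII n. s ^ ides \<sigma> * t ^ des \<sigma> * q ^ maj \<sigma>)
           = (\<Sum>\<sigma>\<in>RS n. s ^ ides \<sigma> * t ^ des \<sigma> * q ^ maj \<sigma>)"
    unfolding G .
qed


end
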